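(* Let $\Phi\in C^1(V,\mathbb{R})$ be twice continuously differentiable on a neighbourhood of $B_{++}$, with $\nabla\Phi(w,u)\in V_{++}$ for all $(w,u)\in S_+\cup B_{++}$, so that $G^\Phi:B_{++}\to B_{++}$ is well defined. Suppose there is a matrix $A\in\mathbb{R}^{(K+1)\times(K+1)}_+$ such that $F=G^\Phi$ and $A$ satisfy, for all $i,k\in[K]$, $j,a\in[n_1]$, $b\in[d]$ and $(w,u)\in B_{++}$, $$\langle|\nabla_{w_k}F_{w_{i,j}}|,w_k\rangle\le A_{i,k}F_{w_{i,j}},\ \ \langle|\nabla_u F_{w_{i,j}}|,u\rangle\le A_{i,K+1}F_{w_{i,j}},\ \ \langle|\nabla_{w_k}F_{u_{ab}}|,w_k\rangle\le A_{K+1,k}F_{u_{ab}},\ \ \langle|\nabla_u F_{u_{ab}}|,u\rangle\le A_{K+1,K+1}F_{u_{ab}}$$ (all evaluated at $(w,u)$), and that $A^T$ has an eigenvector $\gamma\in\mathbb{R}^{K+1}_{++}$. If $\rho(A)<1$, then $\Phi$ has a unique critical point $(w^*,u^* )$ on $S_{++}$ (in the sense of existence of Lagrange multipliers $\lambda_j$ with $\nabla_{w_j}\Phi=\lambda_j\psi_{p_w}(w_j)$, $\nabla_u\Phi=\lambda_{K+1}\psi_{p_u}(u)$), and it is the global maximizer of $\Phi$ on $S_+$. Moreover, for every $(w^0,u^0)\in S_{++}$ the sequence $(w^{k+1},u^{k+1})=G^\Phi(w^k,u^k)$ converges to $(w^*,u^* )$ and $$\|(w^k,u^k)-(w^*,u^*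 )\|_\infty\le\rho(A)^k\,\frac{\mu_\gamma\big((w^1,u^1),(w^0,u^0)\big)}{(1-\rho(A))\min\big\{\frac{\gamma_{K+1}}{\rho_u},\min_{t\in[K]}\frac{\gamma_t}{\rho_w}\big\}}\qquad\forall k\in\mathbb{N}.$$
   Context: $\mathbb{R}_+=[0,\infty)$, $\mathbb{R}_{++}=(0,\infty)$. $V=\mathbb{R}^{K\times n_1}\times\mathbb{R}^{n_1\times d}$, $V_{++}=\mathbb{R}^{K\times n_1}_{++}\times\mathbb{R}^{n_1\times d}_{++}$; $w$ has rows $w_1,\dots,w_K$; $\|\cdot\|_p$ of a matrix is the entrywise $\ell_p$ norm; $\|\cdot\|_\infty$ is the maximum absolute entry. Given $p_w,p_u\in(1,\infty)$ and $\rho_w,\rho_u>0$: $S_+=\{(w,u)\in\mathbb{R}^{K\times n_1}_+\times\mathbb{R}^{n_1\times d}_+ : \|u\|_{p_u}=\rho_u,\ \|w_i\|_{p_w}=\rho_w\ \forall i\}$, $S_{++}=S_+\cap V_{++}$, $B_{++}=\{(w,u)\in V_{++} : \|u\|_{p_u}\le\rho_u,\ \|w_i\|_{p_w}\le\rho_w\ \forall i\}$. For $p\in(1,\infty)$, $p'=p/(p-1)$, $\psi_p(z)=\operatorname{sign}(z)|z|^{p-1}$ componentwise. $$G^{\Phi}(w,u)=\Big(\tfrac{\rho_w\psi_{p_w'}(\nabla_{w_1}\Phi)}{\|\psi_{p_w'}(\nabla_{w_1}\Phi)\|_{p_w}},\dots,\tfrac{\rho_w\psi_{p_w'}(\nabla_{w_K}\Phi)}{\|\psi_{p_w'}(\nabla_{w_K}\Phi)\|_{p_w}},\tfrac{\rho_u\psi_{p_u'}(\nabla_u\Phi)}{\|\psi_{p_u'}(\nabla_u\Phi)\|_{p_u}}\Big)(w,u),$$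 with components $F_{w_{i,j}}$, $F_{u_{ab}}$ of $F=G^\Phi$. $|\cdot|$ is entrywise absolute value, $\langle\cdot,\cdot\rangle$ the Frobenius inner product, $\rho(A)$ the spectral radius. For $\gamma\in\mathbb{R}^{K+1}_{++}$, $\mu_\gamma((w,u),(\tilde w,\tilde u))=\sum_{i=1}^K\gamma_i\|\ln w_i-\ln\tilde w_i\|_\infty+\gamma_{K+1}\|\ln u-\ln\tilde u\|_\infty$ ($\ln$ entrywise). *)

theory Defs
  imports "HOL-Analysis.Analysis"
begin

(* Points of V = R^{K x n1} x R^{n1 x d} are pairs (w,u) with
   w :: real^'n^'k  (row i is w$i :: real^'n, the vector w_i)
   u :: real^'d^'n.  K = CARD('k), n1 = CARD('n), d = CARD('d). *)

definition C1_on :: "'a::real_normed_vector set \<Rightarrow> ('a \<Rightarrow> 'b::real_normed_vector) \<Rightarrow> bool" where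
  "C1_on S f \<longleftrightarrow> (\<exists>f'. (\<forall>x\<in>S. (f has_derivative blinfun_apply (f' x)) (at x)) \<and> continuous_on S f')"

definition C2_on :: "'a::real_normed_vector set \<Rightarrow> ('a \<Rightarrow> 'b::real_normed_vector) \<Rightarrow> bool" where
  "C2_on S f \<longleftrightarrow> (\<exists>f'. (\<forall>x\<in>S. (f has_derivative blinfun_apply (f' x)) (at x)) \<and> C1_on S f')"

definition dw :: "((real^'n^'k) \<times> (real^'d^'n) \<Rightarrow> real) \<Rightarrow> (real^'n^'k) \<times> (real^'d^'n) \<Rightarrow> 'k \<Rightarrow> 'n \<Rightarrow> real" where
  "dw f x i j = deriv (\<lambda>t. f (fst x + t *\<^sub>R axis i (axis j 1), snd x)) 0"

definition du :: "((real^'n^'k) \<times> (real^'d^'n) \<Rightarrow> real) \<Rightarrow> (real^'n^'k) \<times> (real^'d^'n) \<Rightarrow> 'n \<Rightarrow> 'd \<Rightarrow> real" where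
  "du f x a b = deriv (\<lambda>t. f (fst x, snd x + t *\<^sub>R axis a (axis b 1))) 0"

definition gradw :: "((real^'n^'k) \<times> (real^'d^'n) \<Rightarrow> real) \<Rightarrow> (real^'n^'k) \<times> (real^'d^'n) \<Rightarrow> 'k \<Rightarrow> real^'n" where
  "gradw f x i = (\<chi> j. dw f x i j)"

definition gradu :: "((real^'n^'k) \<times> (real^'d^'n) \<Rightarrow> real) \<Rightarrow> (real^'n^'k) \<times> (real^'d^'n) \<Rightarrow> real^'d^'n" where
  "gradu f x = (\<chi> a b. du f x a b)"

definition vnorm :: "real \<Rightarrow> real^'n \<Rightarrow> real" where
  "vnorm p v = (\<Sum>j\<in>UNIV. \<bar>v$j\<bar> powr p) powr (1/p)"

definition mnorm :: "real \<Rightarrow> real^'d^'n \<Rightarrow> real" where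
  "mnorm p u = (\<Sum>a\<in>UNIV. \<Sum>b\<in>UNIV. \<bar>u$a$b\<bar> powr p) powr (1/p)"

definition conj_exp :: "real \<Rightarrow> real" where
  "conj_exp p = p / (p - 1)"

definition psi :: "real \<Rightarrow> real \<Rightarrow> real" where
  "psi p z = sgn z * \<bar>z\<bar> powr (p - 1)"

definition vpsi :: "real \<Rightarrow> real^'n \<Rightarrow> real^'n" where
  "vpsi p v = (\<chi> j. psi p (v$j))"

definition mpsi :: "real \<Rightarrow> real^'d^'n \<Rightarrow> real^'d^'n" where
  "mpsi p u = (\<chi> a b. psi p (u$a$b))"

definition GPhi :: "real \<Rightarrow> real \<Rightarrow> real \<Rightarrow> real \<Rightarrow> ((real^'n^'k) \<times> (real^'d^'n) \<Rightarrow> real)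
    \<Rightarrow> (real^'n^'k) \<times> (real^'d^'n) \<Rightarrow> (real^'n^'k) \<times> (real^'d^'n)" where
  "GPhi pw pu rw ru \<Phi> x =
     ((\<chi> i. (rw / vnorm pw (vpsi (conj_exp pw) (gradw \<Phi> x i))) *\<^sub>R vpsi (conj_exp pw) (gradw \<Phi> x i)),
      (ru / mnorm pu (mpsi (conj_exp pu) (gradu \<Phi> x))) *\<^sub>R mpsi (conj_exp pu) (gradu \<Phi> x))"

definition Vpp :: "((real^'n^'k) \<times> (real^'d^'n)) set" where
  "Vpp = {(w,u). (\<forall>i j. w$i$j > 0) \<and> (\<forall>a b. u$a$b > 0)}"

definition Splus :: "real \<Rightarrow> real \<Rightarrow> real \<Rightarrow> real \<Rightarrow> ((real^'n^'k) \<times> (real^'d^'n)) set" where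
  "Splus pw pu rw ru = {(w,u). (\<forall>i j. w$i$j \<ge> 0) \<and> (\<forall>a b. u$a$b \<ge> 0) \<and>
      mnorm pu u = ru \<and> (\<forall>i. vnorm pw (w$i) = rw)}"

definition Spp :: "real \<Rightarrow> real \<Rightarrow> real \<Rightarrow> real \<Rightarrow> ((real^'n^'k) \<times> (real^'d^'n)) set" where
  "Spp pw pu rw ru = Splus pw pu rw ru \<inter> Vpp"

definition Bpp :: "real \<Rightarrow> real \<Rightarrow> real \<Rightarrow> real \<Rightarrow> ((real^'n^'k) \<times> (real^'d^'n)) set" where
  "Bpp pw pu rw ru = {(w,u). (w,u) \<in> Vpp \<and> mnorm pu u \<le> ru \<and> (\<forall>i. vnorm pw (w$i) \<le> rw)}"

definition is_crit :: "real \<Rightarrow> real \<Rightarrow> ((real^'n^'k) \<times> (real^'d^'n) \<Rightarrow> real) \<Rightarrow> (real^'n^'k) \<times> (real^'d^'n) \<Rightarrow> bool" where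
  "is_crit pw pu \<Phi> x \<longleftrightarrow> (\<exists>(lam::'k \<Rightarrow> real) lamu.
      (\<forall>j l. dw \<Phi> x j l = lam j * psi pw (fst x $ j $ l)) \<and>
      (\<forall>a b. du \<Phi> x a b = lamu * psi pu (snd x $ a $ b)))"

definition spec_rad :: "real^'m^'m \<Rightarrow> real" where
  "spec_rad A = Max {cmod c | c. \<exists>v::complex^'m. v \<noteq> 0 \<and>
       (\<forall>i. (\<Sum>j\<in>UNIV. complex_of_real (A$i$j) * v$j) = c * v$i)}"

definition supnorm :: "(real^'n^'k) \<times> (real^'d^'n) \<Rightarrow> real" where
  "supnorm x = max (Max {\<bar>fst x $ i $ j\<bar> | i j. True}) (Max {\<bar>snd x $ a $ b\<bar> | a b. True})"

(* \<mu>_\<gamma>; index None of \<gamma> plays the role of K+1, Some i the role of i *)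
definition mu_gamma :: "real^('k option) \<Rightarrow> (real^'n^'k) \<times> (real^'d^'n) \<Rightarrow> (real^'n^'k) \<times> (real^'d^'n) \<Rightarrow> real" where
  "mu_gamma \<gamma> x y =
     (\<Sum>i\<in>UNIV. \<gamma>$(Some i) * Max {\<bar>ln (fst x $ i $ j) - ln (fst y $ i $ j)\<bar> | j. True})
     + \<gamma>$None * Max {\<bar>ln (snd x $ a $ b) - ln (snd y $ a $ b)\<bar> | a b. True}"

end

theory Submission
  imports Defs
begin


lemma conj_exp_gt1: "p > 1 \<Longrightarrow> conj_exp p > 1"
  unfolding conj_exp_def by (simp add: field_simps)

lemma conj_exp_prod: "p > 1 \<Longrightarrow> (p - 1) * (conj_exp p - 1) = 1"
  unfolding conj_exp_def by (simp add: field_simps)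

lemma psi_pos: "z > 0 \<Longrightarrow> psi p z = z powr (p - 1)"
  unfolding psi_def by simp

lemma psi_pos_gt0: "z > 0 \<Longrightarrow> psi p z > 0"
  unfolding psi_def by simp

lemma psi_psi: assumes "z > 0" "(p - 1) * (q - 1) = 1"
  shows "psi q (psi p z) = z"
  using assms by (simp add: psi_pos psi_pos_gt0 powr_powr)

lemma psi_mult: assumes "z > 0" "c > 0" shows "psi p (c * z) = c powr (p - 1) * psi p z"
  using assms by (simp add: psi_pos powr_mult)

lemma vnorm_scale: assumes "c \<ge> 0" "p > 0" shows "vnorm p (c *\<^sub>R v) = c * vnorm p v"
proof -
  have "(\<Sum>j\<in>UNIV. \<bar>(c *\<^sub>R v)$j\<bar> powr p) = c powr p * (\<Sum>j\<in>UNIV. \<bar>v$j\<bar> powr p)"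
    using assms by (simp add: abs_mult powr_mult sum_distrib_left)
  then show ?thesis using assms unfolding vnorm_def
    by (simp add: powr_mult powr_powr sum_nonneg)
qed

lemma mnorm_scale: assumes "c \<ge> 0" "p > 0" shows "mnorm p (c *\<^sub>R v) = c * mnorm p v"
proof -
  have "(\<Sum>a\<in>UNIV. \<Sum>b\<in>UNIV. \<bar>(c *\<^sub>R v)$a$b\<bar> powr p) = c powr p * (\<Sum>a\<in>UNIV. \<Sum>b\<in>UNIV. \<bar>v$a$b\<bar> powr p)"
    using assms by (simp add: abs_mult powr_mult sum_distrib_left)
  then show ?thesis using assms unfolding mnorm_def
    by (simp add: powr_mult powr_powr sum_nonneg)
qed

lemma vnorm_pos: assumes "\<forall>j. v$j > 0" "p > 0" shows "vnorm p v > 0"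
proof -
  have "(\<Sum>j\<in>UNIV. \<bar>v$j\<bar> powr p) > 0"
    using assms by (intro sum_pos) (auto simp: order_less_imp_not_eq2)
  then show ?thesis unfolding vnorm_def by simp
qed

lemma mnorm_pos: assumes "\<forall>a b. v$a$b > 0" "p > 0" shows "mnorm p v > 0"
proof -
  have "(\<Sum>a\<in>UNIV. \<Sum>b\<in>UNIV. \<bar>v$a$b\<bar> powr p) > 0"
    using assms by (intro sum_pos) (auto simp: order_less_imp_not_eq2)
  then show ?thesis unfolding mnorm_def by simp
qed

lemma vnorm_ge_entry: assumes "v$j \<ge> 0" "p > 0" shows "v$j \<le> vnorm p v"
proof -
  have "\<bar>v$j\<bar> powr p \<le> (\<Sum>j\<in>UNIV. \<bar>v$j\<bar> powr p)"
    by (rule member_le_sum) auto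
  then have "(\<bar>v$j\<bar> powr p) powr (1/p) \<le> (\<Sum>j\<in>UNIV. \<bar>v$j\<bar> powr p) powr (1/p)"
    using assms by (intro powr_mono2) auto
  then show ?thesis using assms unfolding vnorm_def by (simp add: powr_powr)
qed

lemma mnorm_ge_entry: assumes "v$a$b \<ge> 0" "p > 0" shows "v$a$b \<le> mnorm p v"
proof -
  have "\<bar>v$a$b\<bar> powr p \<le> (\<Sum>b\<in>UNIV. \<bar>v$a$b\<bar> powr p)"
    by (rule member_le_sum) auto
  also have "\<dots> \<le> (\<Sum>a\<in>UNIV. \<Sum>b\<in>UNIV. \<bar>v$a$b\<bar> powr p)"
    by (rule member_le_sum[where f="\<lambda>a. \<Sum>b\<in>UNIV. \<bar>v$a$b\<bar> powr p"]) (auto intro: sum_nonneg)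
  finally have "(\<bar>v$a$b\<bar> powr p) powr (1/p) \<le> (\<Sum>a\<in>UNIV. \<Sum>b\<in>UNIV. \<bar>v$a$b\<bar> powr p) powr (1/p)"
    using assms by (intro powr_mono2) auto
  then show ?thesis using assms unfolding mnorm_def by (simp add: powr_powr)
qed


lemma G_fst: "fst (GPhi pw pu rw ru \<Phi> x) $ i $ j
   = (rw / vnorm pw (vpsi (conj_exp pw) (gradw \<Phi> x i))) * psi (conj_exp pw) (dw \<Phi> x i j)"
  by (simp add: GPhi_def vpsi_def gradw_def)

lemma G_snd: "snd (GPhi pw pu rw ru \<Phi> x) $ a $ b
   = (ru / mnorm pu (mpsi (conj_exp pu) (gradu \<Phi> x))) * psi (conj_exp pu) (du \<Phi> x a b)"
  by (simp add: GPhi_def mpsi_def gradu_def)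

lemma G_in_Spp:
  assumes pw: "pw > 1" and pu: "pu > 1" and rw: "rw > 0" and ru: "ru > 0"
    and gp: "\<forall>i j. dw \<Phi> x i j > 0" "\<forall>a b. du \<Phi> x a b > 0"
  shows "GPhi pw pu rw ru \<Phi> x \<in> Spp pw pu rw ru"
proof -
  let ?G = "GPhi pw pu rw ru \<Phi> x"
  have vp: "\<And>i. vnorm pw (vpsi (conj_exp pw) (gradw \<Phi> x i)) > 0"
    using gp pw by (intro vnorm_pos) (auto simp: vpsi_def gradw_def psi_pos_gt0)
  have mp: "mnorm pu (mpsi (conj_exp pu) (gradu \<Phi> x)) > 0"
    using gp pu by (intro mnorm_pos) (auto simp: mpsi_def gradu_def psi_pos_gt0)
  have f: "\<forall>i j. fst ?G $ i $ j > 0"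
    using vp gp rw by (auto simp: G_fst psi_pos_gt0)
  have s: "\<forall>a b. snd ?G $ a $ b > 0"
    using mp gp ru by (auto simp: G_snd psi_pos_gt0)
  have nf: "\<forall>i. vnorm pw (fst ?G $ i) = rw"
  proof
    fix i
    have "fst ?G $ i = (rw / vnorm pw (vpsi (conj_exp pw) (gradw \<Phi> x i))) *\<^sub>R vpsi (conj_exp pw) (gradw \<Phi> x i)"
      by (simp add: GPhi_def)
    then show "vnorm pw (fst ?G $ i) = rw"
      using vp[of i] rw pw by (simp add: vnorm_scale)
  qed
  have ns: "mnorm pu (snd ?G) = ru"
  proof -
    have "snd ?G = (ru / mnorm pu (mpsi (conj_exp pu) (gradu \<Phi> x))) *\<^sub>R mpsi (conj_exp pu) (gradu \<Phi> x)"
      by (simp add: GPhi_def)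
    then show ?thesis
      using mp ru pu by (simp add: mnorm_scale)
  qed
  show ?thesis
    using f s nf ns unfolding Spp_def Splus_def Vpp_def
    by (cases ?G) (auto intro: less_imp_le)
qed

lemma crit_imp_fixed:
  assumes pw: "pw > 1" and pu: "pu > 1" and rw: "rw > 0" and ru: "ru > 0"
    and gp: "\<forall>i j. dw \<Phi> x i j > 0" "\<forall>a b. du \<Phi> x a b > 0"
    and xS: "x \<in> Spp pw pu rw ru" and cr: "is_crit pw pu \<Phi> x"
  shows "GPhi pw pu rw ru \<Phi> x = x"
proof -
  obtain w u where x: "x = (w,u)" by (cases x)
  from xS have wp: "\<forall>i j. w$i$j > 0" and up: "\<forall>a b. u$a$b > 0"
    and nw: "\<forall>i. vnorm pw (w$i) = rw" and nu: "mnorm pu u = ru"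
    by (auto simp: Spp_def Splus_def Vpp_def x)
  from cr obtain lam lamu where
    l1: "\<forall>j l. dw \<Phi> x j l = lam j * psi pw (w $ j $ l)" and
    l2: "\<forall>a b. du \<Phi> x a b = lamu * psi pu (u $ a $ b)"
    unfolding is_crit_def x by auto
  let ?q = "conj_exp pw" and ?r = "conj_exp pu"
  have lampos: "lam i > 0" for i
  proof -
    have "dw \<Phi> x i undefined > 0" using gp by auto
    then have "lam i * psi pw (w$i$undefined) > 0" using l1 by auto
    moreover have "psi pw (w$i$undefined) > 0" using wp psi_pos_gt0 by auto
    ultimately show ?thesis by (simp add: zero_less_mult_iff)
  qed
  have lamupos: "lamu > 0"
  proof -
    have "du \<Phi> x undefined undefined > 0" using gp by auto
    then have "lamu * psi pu (u$undefined$undefined) > 0" using l2 by auto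
    moreover have "psi pu (u$undefined$undefined) > 0" using up psi_pos_gt0 by auto
    ultimately show ?thesis by (simp add: zero_less_mult_iff)
  qed
  have q1: "(pw - 1) * (?q - 1) = 1" using pw conj_exp_prod by blast
  have r1: "(pu - 1) * (?r - 1) = 1" using pu conj_exp_prod by blast
  have vw: "vpsi ?q (gradw \<Phi> x i) = lam i powr (?q - 1) *\<^sub>R w$i" for i
  proof -
    have "psi ?q (dw \<Phi> x i j) = lam i powr (?q - 1) * w$i$j" for j
      using l1 lampos[of i] wp psi_mult[of "psi pw (w$i$j)" "lam i" ?q] psi_psi[OF _ q1] psi_pos_gt0
      by (simp add: mult.commute)
    then show ?thesis by (simp add: vpsi_def gradw_def vec_eq_iff)
  qed
  have vu: "mpsi ?r (gradu \<Phi> x) = lamu powr (?r - 1) *\<^sub>R u"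
  proof -
    have "psi ?r (du \<Phi> x a b) = lamu powr (?r - 1) * u$a$b" for a b
      using l2 lamupos up psi_mult[of "psi pu (u$a$b)" "lamu" ?r] psi_psi[OF _ r1] psi_pos_gt0
      by (simp add: mult.commute)
    then show ?thesis by (simp add: mpsi_def gradu_def vec_eq_iff)
  qed
  have "fst (GPhi pw pu rw ru \<Phi> x) = w"
  proof -
    have "fst (GPhi pw pu rw ru \<Phi> x) $ i = w $ i" for i
    proof -
      have "fst (GPhi pw pu rw ru \<Phi> x) $ i = (rw / vnorm pw (vpsi ?q (gradw \<Phi> x i))) *\<^sub>R vpsi ?q (gradw \<Phi> x i)"
        by (simp add: GPhi_def)
      also have "\<dots> = w$i"
        using lampos[of i] pw rw nw by (simp add: vw vnorm_scale)
      finally show ?thesis .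
    qed
    then show ?thesis by (simp add: vec_eq_iff)
  qed
  moreover have "snd (GPhi pw pu rw ru \<Phi> x) = u"
  proof -
    have "snd (GPhi pw pu rw ru \<Phi> x) = (ru / mnorm pu (mpsi ?r (gradu \<Phi> x))) *\<^sub>R mpsi ?r (gradu \<Phi> x)"
      by (simp add: GPhi_def)
    also have "\<dots> = u"
      using lamupos pu ru nu by (simp add: vu mnorm_scale)
    finally show ?thesis .
  qed
  ultimately show ?thesis by (simp add: x prod_eq_iff)
qed

lemma fixed_imp_crit:
  assumes pw: "pw > 1" and pu: "pu > 1" and rw: "rw > 0" and ru: "ru > 0"
    and gp: "\<forall>i j. dw \<Phi> x i j > 0" "\<forall>a b. du \<Phi> x a b > 0"
    and fx: "GPhi pw pu rw ru \<Phi> x = x"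
  shows "is_crit pw pu \<Phi> x"
proof -
  let ?q = "conj_exp pw" and ?r = "conj_exp pu"
  let ?c = "\<lambda>i. rw / vnorm pw (vpsi ?q (gradw \<Phi> x i))"
  let ?d = "ru / mnorm pu (mpsi ?r (gradu \<Phi> x))"
  have vp: "\<And>i. vnorm pw (vpsi ?q (gradw \<Phi> x i)) > 0"
    using gp pw by (intro vnorm_pos) (auto simp: vpsi_def gradw_def psi_pos_gt0)
  have mp: "mnorm pu (mpsi ?r (gradu \<Phi> x)) > 0"
    using gp pu by (intro mnorm_pos) (auto simp: mpsi_def gradu_def psi_pos_gt0)
  have cpos: "?c i > 0" for i using vp rw by auto
  have dpos: "?d > 0" using mp ru by auto
  have q1: "(?q - 1) * (pw - 1) = 1" using pw conj_exp_prod by (simp add: mult.commute)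
  have r1: "(?r - 1) * (pu - 1) = 1" using pu conj_exp_prod by (simp add: mult.commute)
  have e1: "fst x $ i $ j = ?c i * psi ?q (dw \<Phi> x i j)" for i j
    using fx G_fst[of pw pu rw ru \<Phi> x i j] by simp
  have e2: "snd x $ a $ b = ?d * psi ?r (du \<Phi> x a b)" for a b
    using fx G_snd[of pw pu rw ru \<Phi> x a b] by simp
  have w: "dw \<Phi> x i j = (1 / ?c i) powr (pw - 1) * psi pw (fst x $ i $ j)" for i j
  proof -
    have "psi pw (fst x $ i $ j) = ?c i powr (pw - 1) * psi pw (psi ?q (dw \<Phi> x i j))"
      using e1 cpos gp psi_mult psi_pos_gt0 by metis
    also have "\<dots> = ?c i powr (pw - 1) * dw \<Phi> x i j"
      using psi_psi[OF _ q1] gp by simp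
    finally have "psi pw (fst x $ i $ j) = ?c i powr (pw - 1) * dw \<Phi> x i j" .
    moreover have "?c i powr (pw - 1) > 0" using cpos[of i] vp[of i] rw by (simp del: divide_pos_pos)
    ultimately show ?thesis using cpos[of i] vp[of i] rw
      by (simp add: powr_divide)
  qed
  have u: "du \<Phi> x a b = (1 / ?d) powr (pu - 1) * psi pu (snd x $ a $ b)" for a b
  proof -
    have "psi pu (snd x $ a $ b) = ?d powr (pu - 1) * psi pu (psi ?r (du \<Phi> x a b))"
      using e2 dpos gp psi_mult psi_pos_gt0 by metis
    also have "\<dots> = ?d powr (pu - 1) * du \<Phi> x a b"
      using psi_psi[OF _ r1] gp by simp
    finally have "psi pu (snd x $ a $ b) = ?d powr (pu - 1) * du \<Phi> x a b" .
    moreover have "?d powr (pu - 1) > 0" using dpos mp ru by (simp del: divide_pos_pos)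
    ultimately show ?thesis using dpos mp ru
      by (simp add: powr_divide)
  qed
  show ?thesis unfolding is_crit_def
    apply (rule exI[where x="\<lambda>i. (1 / ?c i) powr (pw - 1)"])
    apply (rule exI[where x="(1 / ?d) powr (pu - 1)"])
    using w u by blast
qed


lemma eig_indep:
  fixes B :: "complex^'m^'m" and V :: "complex \<Rightarrow> complex^'m"
  assumes "finite C" "\<forall>c\<in>C. V c \<noteq> 0 \<and> B *v V c = c *s V c"
  shows "\<forall>a. (\<Sum>c\<in>C. a c *s V c) = 0 \<longrightarrow> (\<forall>c\<in>C. a c = 0)"
  using assms
proof (induction C rule: finite_induct)
  case empty
  then show ?case by simp
next
  case (insert d C)
  show ?case
  proof (intro allI impI)
    fix a assume s0: "(\<Sum>c\<in>insert d C. a c *s V c) = 0"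
    then have s1: "a d *s V d + (\<Sum>c\<in>C. a c *s V c) = 0"
      using insert by simp
    have "B *v (a d *s V d + (\<Sum>c\<in>C. a c *s V c)) = 0" using s1 by simp
    then have s2: "(a d * d) *s V d + (\<Sum>c\<in>C. (a c * c) *s V c) = 0"
    proof -
      have l1: "B *v (\<Sum>c\<in>C. a c *s V c) = (\<Sum>c\<in>C. a c *s (B *v V c))"
        by (simp only: vec.sum vec.scale)
      have l2: "B *v (a d *s V d) = a d *s (B *v V d)" by (simp only: vec.scale)
      have l3: "(\<Sum>c\<in>C. a c *s (B *v V c)) = (\<Sum>c\<in>C. (a c * c) *s V c)"
        using insert.prems by (intro sum.cong) (auto simp: vector_smult_assoc)
      have l4: "a d *s (B *v V d) = (a d * d) *s V d"
        using insert.prems by (auto simp: vector_smult_assoc)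
      show ?thesis using l1 l2 l3 l4 \<open>B *v (a d *s V d + (\<Sum>c\<in>C. a c *s V c)) = 0\<close>
        by (simp only: matrix_vector_right_distrib)
    qed
    have s3: "(a d * d) *s V d + (\<Sum>c\<in>C. (a c * d) *s V c) = 0"
    proof -
      have "d *s (a d *s V d + (\<Sum>c\<in>C. a c *s V c)) = 0" using s1 by simp
      then show ?thesis by (simp add: vec_eq_iff sum_component sum_distrib_left mult.assoc mult.left_commute mult.commute)
    qed
    have "(\<Sum>c\<in>C. (a c * (c - d)) *s V c) = 0"
    proof -
      have "(\<Sum>c\<in>C. (a c * (c - d)) *s V c) = (\<Sum>c\<in>C. (a c * c) *s V c) - (\<Sum>c\<in>C. (a c * d) *s V c)"
        by (simp add: sum_subtractf[symmetric] right_diff_distrib vector_sub_rdistrib)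
      also have "\<dots> = 0"
      proof -
        have "(\<Sum>c\<in>C. (a c * c) *s V c) = - ((a d * d) *s V d)"
          using s2 by (simp add: eq_neg_iff_add_eq_0 add.commute)
        moreover have "(\<Sum>c\<in>C. (a c * d) *s V c) = - ((a d * d) *s V d)"
          using s3 by (simp add: eq_neg_iff_add_eq_0 add.commute)
        ultimately show ?thesis by simp
      qed
      finally show ?thesis .
    qed
    moreover have IH: "\<forall>a. (\<Sum>c\<in>C. a c *s V c) = 0 \<longrightarrow> (\<forall>c\<in>C. a c = 0)"
      by (rule insert.IH) (use insert.prems in simp)
    ultimately have z: "\<forall>c\<in>C. a c * (c - d) = 0"
      using IH[rule_format, of "\<lambda>c. a c * (c - d)"] by blast
    then have zc: "\<forall>c\<in>C. a c = 0" using insert.hyps by auto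
    then have "a d *s V d = 0" using s1 by simp
    then have "a d = 0" using insert.prems by (auto simp: vec_eq_iff)
    with zc show "\<forall>c\<in>insert d C. a c = 0" by simp
  qed
qed

lemma eig_finite:
  fixes A :: "real^'m^'m"
  shows "finite {c. \<exists>v::complex^'m. v \<noteq> 0 \<and>
       (\<forall>i. (\<Sum>j\<in>UNIV. complex_of_real (A$i$j) * v$j) = c * v$i)}" (is "finite ?S")
proof (rule ccontr)
  assume inf: "infinite ?S"
  let ?B = "(\<chi> i j. complex_of_real (A$i$j)) :: complex^'m^'m"
  have eq: "(\<forall>i. (\<Sum>j\<in>UNIV. complex_of_real (A$i$j) * v$j) = c * v$i) \<longleftrightarrow> ?B *v v = c *s v" for v c
    by (simp add: matrix_vector_mult_def vec_eq_iff)
  define V where "V c = (SOME v. v \<noteq> 0 \<and> ?B *v v = c *s v)" for c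
  have V: "c \<in> ?S \<Longrightarrow> V c \<noteq> 0 \<and> ?B *v V c = c *s V c" for c
  proof -
    assume "c \<in> ?S"
    then obtain v where "v \<noteq> 0 \<and> ?B *v v = c *s v" using eq by auto
    then show ?thesis unfolding V_def by (rule someI)
  qed
  obtain C where C: "C \<subseteq> ?S" "finite C" "card C = Suc CARD('m)"
    using infinite_arbitrarily_large[OF inf] by blast
  have VC: "\<forall>c\<in>C. V c \<noteq> 0 \<and> ?B *v V c = c *s V c" using V C(1) by blast
  have inj: "inj_on V C"
  proof
    fix c d assume "c \<in> C" "d \<in> C" "V c = V d"
    then have "c *s V c = d *s V c" using VC by metis
    then have "(c - d) *s V c = 0" by (simp add: vector_sub_rdistrib)
    then show "c = d" using VC \<open>c \<in> C\<close> by (auto simp: vec_eq_iff)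
  qed
  have ind: "vec.independent (V ` C)"
    unfolding vec.independent_explicit
  proof (intro conjI allI impI ballI)
    show "finite (V ` C)" using C by simp
  next
    fix k v assume s: "(\<Sum>v\<in>V ` C. k v *s v) = 0" and v: "v \<in> V ` C"
    have "(\<Sum>c\<in>C. (k \<circ> V) c *s V c) = 0" using s inj by (simp add: sum.reindex)
    then have "\<forall>c\<in>C. (k \<circ> V) c = 0" using eig_indep[OF C(2) VC] by blast
    then show "k v = 0" using v by auto
  qed
  have "card (V ` C) \<le> vec.dim (V ` C)" using vec.independent_bound_general[OF ind] by simp
  also have "\<dots> \<le> vec.dim (UNIV :: (complex^'m) set)" by (rule vec.dim_subset) simp
  also have "\<dots> = CARD('m)" by (rule vec_dim_card)
  finally have "card (V ` C) \<le> CARD('m)" .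
  moreover have "card (V ` C) = card C" using inj by (rule card_image)
  ultimately show False using C(3) by simp
qed

lemma theta_le_specrad:
  fixes A :: "real^'m^'m" and \<gamma> :: "real^'m"
  assumes g: "\<gamma> \<noteq> 0" and e: "\<forall>s. (\<Sum>r\<in>UNIV. A$r$s * \<gamma>$r) = \<theta> * \<gamma>$s"
  shows "\<bar>\<theta>\<bar> \<le> spec_rad A"
proof -
  let ?M = "A - mat \<theta>"
  have md: "(\<Sum>r\<in>UNIV. (mat \<theta> :: real^'m^'m)$r$s * w$r) = \<theta> * w$s" for s and w :: "real^'m"
  proof -
    have "(\<Sum>r\<in>UNIV. (mat \<theta> :: real^'m^'m)$r$s * w$r) = (\<Sum>r\<in>UNIV. if r = s then \<theta> * w$r else 0)"
      by (rule sum.cong) (auto simp: mat_def)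
    then show ?thesis by simp
  qed
  have md2: "(\<Sum>r\<in>UNIV. (mat \<theta> :: real^'m^'m)$s$r * w$r) = \<theta> * w$s" for s and w :: "real^'m"
  proof -
    have "(\<Sum>r\<in>UNIV. (mat \<theta> :: real^'m^'m)$s$r * w$r) = (\<Sum>r\<in>UNIV. if r = s then \<theta> * w$r else 0)"
      by (rule sum.cong) (auto simp: mat_def)
    then show ?thesis by simp
  qed
  have "transpose ?M *v \<gamma> = 0"
  proof -
    have "(transpose ?M *v \<gamma>)$s = 0" for s
    proof -
      have "(transpose ?M *v \<gamma>)$s = (\<Sum>r\<in>UNIV. A$r$s * \<gamma>$r) - (\<Sum>r\<in>UNIV. (mat \<theta> :: real^'m^'m)$r$s * \<gamma>$r)"
        by (simp add: matrix_vector_mult_def transpose_def left_diff_distrib sum_subtractf)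
      then show ?thesis using e md by simp
    qed
    then show ?thesis by (simp add: vec_eq_iff)
  qed
  then have "\<not> (\<exists>B. B ** transpose ?M = mat 1)"
    using g matrix_left_invertible_ker by blast
  then have "\<not> (\<exists>B. ?M ** B = mat 1)" using left_invertible_transpose by blast
  then have "\<not> (\<exists>B. B ** ?M = mat 1)" using matrix_left_right_inverse by blast
  then obtain v where v: "?M *v v = 0" "v \<noteq> 0" using matrix_left_invertible_ker by blast
  let ?v = "(\<chi> i. complex_of_real (v$i)) :: complex^'m"
  have "?v \<noteq> 0" using v by (auto simp: vec_eq_iff)
  moreover have "\<forall>i. (\<Sum>j\<in>UNIV. complex_of_real (A$i$j) * ?v$j) = complex_of_real \<theta> * ?v$i"
  proof
    fix i
    have "(?M *v v)$i = (\<Sum>j\<in>UNIV. A$i$j * v$j) - (\<Sum>r\<in>UNIV. (mat \<theta> :: real^'m^'m)$i$r * v$r)"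
        by (simp add: matrix_vector_mult_def left_diff_distrib sum_subtractf)
    then have "(\<Sum>j\<in>UNIV. A$i$j * v$j) = \<theta> * v$i"
      using v(1) md2 by simp
    then have "complex_of_real (\<Sum>j\<in>UNIV. A$i$j * v$j) = complex_of_real (\<theta> * v$i)" by simp
    then show "(\<Sum>j\<in>UNIV. complex_of_real (A$i$j) * ?v$j) = complex_of_real \<theta> * ?v$i"
      by simp
  qed
  ultimately have "cmod (complex_of_real \<theta>) \<in> {cmod c | c. \<exists>v::complex^'m. v \<noteq> 0 \<and>
       (\<forall>i. (\<Sum>j\<in>UNIV. complex_of_real (A$i$j) * v$j) = c * v$i)}" by blast
  moreover have "finite {cmod c | c. \<exists>v::complex^'m. v \<noteq> 0 \<and>
       (\<forall>i. (\<Sum>j\<in>UNIV. complex_of_real (A$i$j) * v$j) = c * v$i)}"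
    using eig_finite[of A] by (simp add: setcompr_eq_image)
  ultimately have "cmod (complex_of_real \<theta>) \<le> spec_rad A" unfolding spec_rad_def by (rule Max_ge[rotated])
  then show ?thesis by simp
qed


type_synonym ('n,'k,'d) pt = "(real^'n^'k) \<times> (real^'d^'n)"

definition ew :: "'k \<Rightarrow> 'n \<Rightarrow> (real^'n^'k) \<times> (real^'d^'n)" where
  "ew i j = (axis i (axis j 1), 0)"
definition eu :: "'n \<Rightarrow> 'd \<Rightarrow> (real^'n^'k) \<times> (real^'d^'n)" where
  "eu a b = (0, axis a (axis b 1))"

lemma line_deriv:
  fixes f :: "'a::real_normed_vector \<Rightarrow> real"
  assumes "(f has_derivative D) (at x)"
  shows "((\<lambda>t. f (x + t *\<^sub>R E)) has_real_derivative D E) (at 0)"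
proof -
  have l: "((\<lambda>t. x + t *\<^sub>R E) has_derivative (\<lambda>h. h *\<^sub>R E)) (at 0)"
    by (auto intro!: derivative_eq_intros)
  have "((\<lambda>t. f (x + t *\<^sub>R E)) has_derivative (\<lambda>h. D (h *\<^sub>R E))) (at 0)"
    using has_derivative_compose[OF l] assms by simp
  moreover have "(\<lambda>h. D (h *\<^sub>R E)) = (*) (D E)"
    using has_derivative_linear[OF assms] by (auto simp: linear_scale)
  ultimately show ?thesis by (simp add: has_field_derivative_def)
qed

lemma dw_eq:
  assumes "(f has_derivative D) (at x)"
  shows "dw f x i j = D (ew i j)"
proof -
  have "(\<lambda>t. f (fst x + t *\<^sub>R axis i (axis j 1), snd x)) = (\<lambda>t. f (x + t *\<^sub>R ew i j))"
    by (cases x) (simp add: ew_def)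
  then show ?thesis unfolding dw_def by (simp only:) (rule DERIV_imp_deriv[OF line_deriv[OF assms]])
qed

lemma du_eq:
  assumes "(f has_derivative D) (at x)"
  shows "du f x a b = D (eu a b)"
proof -
  have "(\<lambda>t. f (fst x, snd x + t *\<^sub>R axis a (axis b 1))) = (\<lambda>t. f (x + t *\<^sub>R eu a b))"
    by (cases x) (simp add: eu_def)
  then show ?thesis unfolding du_def by (simp only:) (rule DERIV_imp_deriv[OF line_deriv[OF assms]])
qed

lemma axis2: "(axis i (axis j (1::real)) :: real^'b^'a) $ i0 $ j0 = (if i = i0 then if j = j0 then 1 else 0 else 0)"
  by (auto simp: axis_def)

lemma sum2_delta:
  fixes w :: "real^'b^'a"
  shows "(\<Sum>i\<in>UNIV. \<Sum>j\<in>UNIV. w$i$j * (if i = i0 then if j = j0 then 1 else 0 else 0)) = w$i0$j0"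
proof -
  have "(\<Sum>i\<in>UNIV. \<Sum>j\<in>UNIV. w$i$j * (if i = i0 then if j = j0 then 1 else 0 else 0))
      = (\<Sum>i\<in>UNIV. if i = i0 then (\<Sum>j\<in>UNIV. w$i$j * (if j = j0 then 1 else 0)) else 0)"
    by (intro sum.cong) auto
  also have "\<dots> = (\<Sum>j\<in>UNIV. w$i0$j * (if j = j0 then 1 else 0))" by simp
  also have "\<dots> = (\<Sum>j\<in>UNIV. if j = j0 then w$i0$j else 0)" by (rule sum.cong) auto
  also have "\<dots> = w$i0$j0" by simp
  finally show ?thesis .
qed

lemma pt_expand:
  fixes w :: "real^'n^'k" and u :: "real^'d^'n"
  shows "(w,u) = (\<Sum>i\<in>UNIV. \<Sum>j\<in>UNIV. w$i$j *\<^sub>R ew i j) + (\<Sum>a\<in>UNIV. \<Sum>b\<in>UNIV. u$a$b *\<^sub>R eu a b)"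
proof -
  have w: "(\<Sum>i\<in>UNIV. \<Sum>j\<in>UNIV. w$i$j *\<^sub>R (axis i (axis j 1) :: real^'n^'k)) = w"
    by (simp only: vec_eq_iff sum_component vector_scaleR_component axis2 real_scaleR_def sum2_delta) simp
  have u: "(\<Sum>a\<in>UNIV. \<Sum>b\<in>UNIV. u$a$b *\<^sub>R (axis a (axis b 1) :: real^'d^'n)) = u"
    by (simp only: vec_eq_iff sum_component vector_scaleR_component axis2 real_scaleR_def sum2_delta) simp
  show ?thesis
    by (simp add: prod_eq_iff fst_sum snd_sum ew_def eu_def w u)
qed

lemma lin_expand:
  fixes D :: "(real^'n^'k) \<times> (real^'d^'n) \<Rightarrow> real"
  assumes "linear D"
  shows "D (w,u) = (\<Sum>i\<in>UNIV. \<Sum>j\<in>UNIV. w$i$j * D (ew i j)) + (\<Sum>a\<in>UNIV. \<Sum>b\<in>UNIV. u$a$b * D (eu a b))"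
  apply (subst pt_expand)
  using assms by (simp add: linear_add linear_sum linear_scale)


lemma real_diff_compose:
  fixes f :: "'a::real_normed_vector \<Rightarrow> real"
  assumes "(h has_real_derivative d) (at (f z))" "f differentiable (at z)"
  shows "(\<lambda>y. h (f y)) differentiable (at z)"
proof -
  have "h differentiable (at (f z))"
    using assms(1) unfolding differentiable_def by (auto dest: has_field_derivative_imp_has_derivative)
  then show ?thesis using differentiable_compose assms(2) by blast
qed

lemma psi_has_deriv: assumes "s > 0" shows "(psi q has_real_derivative (q - 1) * s powr (q - 1 - 1)) (at s)"
proof (rule has_field_derivative_transform_within_open[where f="\<lambda>z. z powr (q - 1)" and S="{0<..}"])
  show "((\<lambda>z. z powr (q - 1)) has_real_derivative (q - 1) * s powr (q - 1 - 1)) (at s)"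
    by (rule has_real_derivative_powr) (use assms in auto)
qed (use assms in \<open>auto simp: psi_def\<close>)

lemma abspow_has_deriv: assumes "s > 0" shows "((\<lambda>s. \<bar>s\<bar> powr p) has_real_derivative p * s powr (p - 1)) (at s)"
proof (rule has_field_derivative_transform_within_open[where f="\<lambda>z. z powr p" and S="{0<..}"])
  show "((\<lambda>z. z powr p) has_real_derivative p * s powr (p - 1)) (at s)"
    by (rule has_real_derivative_powr) (use assms in auto)
qed (use assms in auto)

lemma Gcomp_diff_v:
  fixes g :: "'j::finite \<Rightarrow> 'x::real_normed_vector \<Rightarrow> real"
  assumes d: "\<forall>j. g j differentiable (at z)" and pos: "\<forall>j. g j z > 0" and p: "p > 0"
  shows "(\<lambda>y. r / vnorm p (\<chi> j. psi q (g j y)) * psi q (g i y)) differentiable (at z)"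
proof -
  have ps: "\<And>j. (\<lambda>y. psi q (g j y)) differentiable (at z)"
    by (rule real_diff_compose[OF psi_has_deriv]) (use d pos in auto)
  have pspos: "\<And>j. psi q (g j z) > 0" using pos psi_pos_gt0 by blast
  have t: "\<And>j. (\<lambda>y. \<bar>psi q (g j y)\<bar> powr p) differentiable (at z)"
    by (rule real_diff_compose[OF abspow_has_deriv]) (use ps pspos in auto)
  have S: "(\<lambda>y. \<Sum>j\<in>UNIV. \<bar>psi q (g j y)\<bar> powr p) differentiable (at z)"
    using t by (intro differentiable_sum) auto
  have Spos: "(\<Sum>j\<in>UNIV. \<bar>psi q (g j z)\<bar> powr p) > 0"
    using pspos by (intro sum_pos) (auto simp: order_less_imp_not_eq2)
  have N: "(\<lambda>y. (\<Sum>j\<in>UNIV. \<bar>psi q (g j y)\<bar> powr p) powr (1/p)) differentiable (at z)"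
    using real_diff_compose[where f="\<lambda>y. \<Sum>j\<in>UNIV. \<bar>psi q (g j y)\<bar> powr p", OF has_real_derivative_powr[OF Spos] S]
    by simp
  have eq: "(\<lambda>y. r / vnorm p (\<chi> j. psi q (g j y)) * psi q (g i y))
      = (\<lambda>y. r / (\<Sum>j\<in>UNIV. \<bar>psi q (g j y)\<bar> powr p) powr (1/p) * psi q (g i y))"
    by (simp add: vnorm_def)
  show ?thesis unfolding eq
    using N ps Spos by (intro differentiable_mult differentiable_divide) auto
qed

lemma Gcomp_diff_m:
  fixes g :: "'a::finite \<Rightarrow> 'b::finite \<Rightarrow> 'x::real_normed_vector \<Rightarrow> real"
  assumes d: "\<forall>a b. g a b differentiable (at z)" and pos: "\<forall>a b. g a b z > 0" and p: "p > 0"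
  shows "(\<lambda>y. r / mnorm p (\<chi> a b. psi q (g a b y)) * psi q (g a0 b0 y)) differentiable (at z)"
proof -
  have ps: "\<And>a b. (\<lambda>y. psi q (g a b y)) differentiable (at z)"
    by (rule real_diff_compose[OF psi_has_deriv]) (use d pos in auto)
  have pspos: "\<And>a b. psi q (g a b z) > 0" using pos psi_pos_gt0 by blast
  have t: "\<And>a b. (\<lambda>y. \<bar>psi q (g a b y)\<bar> powr p) differentiable (at z)"
    by (rule real_diff_compose[OF abspow_has_deriv]) (use ps pspos in auto)
  have S: "(\<lambda>y. \<Sum>a\<in>UNIV. \<Sum>b\<in>UNIV. \<bar>psi q (g a b y)\<bar> powr p) differentiable (at z)"
    using t by (intro differentiable_sum ballI) auto
  have Spos: "(\<Sum>a\<in>UNIV. \<Sum>b\<in>UNIV. \<bar>psi q (g a b z)\<bar> powr p) > 0"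
    using pspos by (intro sum_pos) (auto simp: order_less_imp_not_eq2)
  have N: "(\<lambda>y. (\<Sum>a\<in>UNIV. \<Sum>b\<in>UNIV. \<bar>psi q (g a b y)\<bar> powr p) powr (1/p)) differentiable (at z)"
    using real_diff_compose[where f="\<lambda>y. \<Sum>a\<in>UNIV. \<Sum>b\<in>UNIV. \<bar>psi q (g a b y)\<bar> powr p", OF has_real_derivative_powr[OF Spos] S]
    by simp
  have eq: "(\<lambda>y. r / mnorm p (\<chi> a b. psi q (g a b y)) * psi q (g a0 b0 y))
      = (\<lambda>y. r / (\<Sum>a\<in>UNIV. \<Sum>b\<in>UNIV. \<bar>psi q (g a b y)\<bar> powr p) powr (1/p) * psi q (g a0 b0 y))"
    by (simp add: mnorm_def)
  show ?thesis unfolding eq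
    using N ps Spos by (intro differentiable_mult differentiable_divide) auto
qed

lemma dw_du_diff:
  fixes \<Phi> :: "(real^'n^'k) \<times> (real^'d^'n) \<Rightarrow> real"
  assumes U: "open U" "z \<in> U"
    and d1: "\<forall>x\<in>U. (\<Phi> has_derivative blinfun_apply (f' x)) (at x)"
    and d2: "\<forall>x\<in>U. (f' has_derivative blinfun_apply (f'' x)) (at x)"
  shows "(\<lambda>y. dw \<Phi> y i j) differentiable (at z)" "(\<lambda>y. du \<Phi> y a b) differentiable (at z)"
proof -
  have bl: "bounded_linear (\<lambda>L. blinfun_apply L E)" for E :: "(real^'n^'k) \<times> (real^'d^'n)"
    by (rule bounded_bilinear.bounded_linear_left[OF bounded_bilinear_blinfun_apply])
  have h: "((\<lambda>y. blinfun_apply (f' y) E) has_derivative (\<lambda>h. blinfun_apply (blinfun_apply (f'' z) h) E)) (at z)" for E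
    using bounded_linear.has_derivative[OF bl d2[rule_format, OF U(2)]] .
  have "((\<lambda>y. dw \<Phi> y i j) has_derivative (\<lambda>h. blinfun_apply (blinfun_apply (f'' z) h) (ew i j))) (at z)"
    by (rule has_derivative_transform_within_open[OF h U]) (use d1 dw_eq in \<open>metis (no_types)\<close>)
  then show "(\<lambda>y. dw \<Phi> y i j) differentiable (at z)" unfolding differentiable_def by blast
  have "((\<lambda>y. du \<Phi> y a b) has_derivative (\<lambda>h. blinfun_apply (blinfun_apply (f'' z) h) (eu a b))) (at z)"
    by (rule has_derivative_transform_within_open[OF h U]) (use d1 du_eq in \<open>metis (no_types)\<close>)
  then show "(\<lambda>y. du \<Phi> y a b) differentiable (at z)" unfolding differentiable_def by blast
qed


lemma geo_sum:
  fixes a b :: "'j \<Rightarrow> real" and t :: real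
  assumes S: "finite S" "S \<noteq> {}" and ab: "\<forall>j\<in>S. a j > 0 \<and> b j > 0" and t: "0 \<le> t" "t \<le> 1"
  shows "(\<Sum>j\<in>S. a j powr (1 - t) * b j powr t) \<le> (\<Sum>j\<in>S. a j) powr (1 - t) * (\<Sum>j\<in>S. b j) powr t"
proof -
  define A where "A = (\<Sum>j\<in>S. a j)"
  define B where "B = (\<Sum>j\<in>S. b j)"
  have A: "A > 0" unfolding A_def using S ab by (intro sum_pos) auto
  have B: "B > 0" unfolding B_def using S ab by (intro sum_pos) auto
  define C where "C = A powr (1 - t) * B powr t"
  have C: "C > 0" unfolding C_def using A B by simp
  have each: "a j powr (1 - t) * b j powr t / C \<le> (1 - t) * (a j / A) + t * (b j / B)" if "j \<in> S" for j
  proof -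
    have "(a j / A) powr (1 - t) * (b j / B) powr t \<le> (1 - t) * (a j / A) + t * (b j / B)"
      using that ab A B t by (intro Youngs_inequality_0) auto
    moreover have "(a j / A) powr (1 - t) * (b j / B) powr t = a j powr (1 - t) * b j powr t / C"
      using that ab A B unfolding C_def by (simp add: powr_divide)
    ultimately show ?thesis by simp
  qed
  have "(\<Sum>j\<in>S. a j powr (1 - t) * b j powr t) / C = (\<Sum>j\<in>S. a j powr (1 - t) * b j powr t / C)"
    by (simp add: sum_divide_distrib)
  also have "\<dots> \<le> (\<Sum>j\<in>S. (1 - t) * (a j / A) + t * (b j / B))"
    using each by (rule sum_mono)
  also have "\<dots> = (1 - t) * (\<Sum>j\<in>S. a j) / A + t * (\<Sum>j\<in>S. b j) / B"
    by (simp add: sum.distrib sum_distrib_left sum_divide_distrib)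
  also have "\<dots> = 1" using A B by (simp add: A_def[symmetric] B_def[symmetric])
  finally show ?thesis using C unfolding C_def[symmetric] A_def[symmetric] B_def[symmetric]
    by (simp add: divide_le_eq)
qed

lemma geo_val: fixes a b t :: real assumes "a > 0" "b > 0"
  shows "exp ((1 - t) * ln a + t * ln b) = a powr (1 - t) * b powr t"
  using assms by (simp add: powr_def exp_add)

lemma geo_pow: fixes a b t p :: real assumes "a > 0" "b > 0"
  shows "\<bar>exp ((1 - t) * ln a + t * ln b)\<bar> powr p = (a powr p) powr (1 - t) * (b powr p) powr t"
proof -
  have "\<bar>a powr (1 - t) * b powr t\<bar> = a powr (1 - t) * b powr t" by (intro abs_of_nonneg) simp
  then show ?thesis
    unfolding geo_val[OF assms] using assms by (simp add: powr_mult powr_powr mult.commute)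
qed

lemma geo_norm:
  fixes a b :: "'j \<Rightarrow> real" and t p r :: real
  assumes S: "finite S" "S \<noteq> {}" and ab: "\<forall>j\<in>S. a j > 0 \<and> b j > 0" and t: "0 \<le> t" "t \<le> 1"
    and p: "p > 0"
    and na: "(\<Sum>j\<in>S. \<bar>a j\<bar> powr p) powr (1/p) \<le> r"
    and nb: "(\<Sum>j\<in>S. \<bar>b j\<bar> powr p) powr (1/p) \<le> r"
  shows "(\<Sum>j\<in>S. \<bar>exp ((1 - t) * ln (a j) + t * ln (b j))\<bar> powr p) powr (1/p) \<le> r"
proof -
  define A where "A = (\<Sum>j\<in>S. a j powr p)"
  define B where "B = (\<Sum>j\<in>S. b j powr p)"
  have A: "A > 0" unfolding A_def using S ab by (intro sum_pos) auto
  have B: "B > 0" unfolding B_def using S ab by (intro sum_pos) auto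
  have "(\<Sum>j\<in>S. \<bar>a j\<bar> powr p) = A" unfolding A_def using ab by (intro sum.cong) auto
  then have na': "A powr (1/p) \<le> r" using na by simp
  have "(\<Sum>j\<in>S. \<bar>b j\<bar> powr p) = B" unfolding B_def using ab by (intro sum.cong) auto
  then have nb': "B powr (1/p) \<le> r" using nb by simp
  have "(\<Sum>j\<in>S. \<bar>exp ((1 - t) * ln (a j) + t * ln (b j))\<bar> powr p) = (\<Sum>j\<in>S. (a j powr p) powr (1 - t) * (b j powr p) powr t)"
    using ab by (intro sum.cong refl geo_pow) auto
  also have "\<dots> \<le> A powr (1 - t) * B powr t"
    unfolding A_def B_def using S ab t by (intro geo_sum) auto
  finally have le: "(\<Sum>j\<in>S. \<bar>exp ((1 - t) * ln (a j) + t * ln (b j))\<bar> powr p) \<le> A powr (1 - t) * B powr t" .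
  have "(\<Sum>j\<in>S. \<bar>exp ((1 - t) * ln (a j) + t * ln (b j))\<bar> powr p) powr (1/p) \<le> (A powr (1 - t) * B powr t) powr (1/p)"
    using le p by (intro powr_mono2) (auto intro: sum_nonneg)
  also have "\<dots> = (A powr (1/p)) powr (1 - t) * (B powr (1/p)) powr t"
    using A B by (simp add: powr_mult powr_powr mult.commute)
  also have "\<dots> \<le> r powr (1 - t) * r powr t"
    using na' nb' A B t by (intro mult_mono powr_mono2) auto
  also have "\<dots> = r"
  proof -
    have "r > 0" using na' A by (metis powr_gt_zero less_le_trans order_less_irrefl order_less_le)
    then show ?thesis by (simp add: powr_add[symmetric])
  qed
  finally show ?thesis .
qed

definition geo :: "(real^'n^'k) \<times> (real^'d^'n) \<Rightarrow> (real^'n^'k) \<times> (real^'d^'n) \<Rightarrow> real \<Rightarrow> (real^'n^'k) \<times> (real^'d^'n)" where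
  "geo x y t = ((\<chi> i j. exp ((1 - t) * ln (fst x$i$j) + t * ln (fst y$i$j))),
                (\<chi> a b. exp ((1 - t) * ln (snd x$a$b) + t * ln (snd y$a$b))))"

lemma geo_in_B:
  assumes x: "x \<in> Bpp pw pu rw ru" and y: "y \<in> Bpp pw pu rw ru" and p: "pw > 0" "pu > 0"
    and t: "0 \<le> t" "t \<le> 1"
  shows "geo x y t \<in> Bpp pw pu rw ru"
proof -
  obtain wx ux where xx: "x = (wx, ux)" by (cases x)
  obtain wy uy where yy: "y = (wy, uy)" by (cases y)
  from x have wx: "\<forall>i j. wx$i$j > 0" "\<forall>a b. ux$a$b > 0" "\<forall>i. vnorm pw (wx$i) \<le> rw" "mnorm pu ux \<le> ru"
    by (auto simp: Bpp_def Vpp_def xx)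
  from y have wy: "\<forall>i j. wy$i$j > 0" "\<forall>a b. uy$a$b > 0" "\<forall>i. vnorm pw (wy$i) \<le> rw" "mnorm pu uy \<le> ru"
    by (auto simp: Bpp_def Vpp_def yy)
  have r1: "vnorm pw (fst (geo x y t) $ i) \<le> rw" for i
  proof -
    have "vnorm pw (fst (geo x y t) $ i) = (\<Sum>j\<in>UNIV. \<bar>exp ((1 - t) * ln (wx$i$j) + t * ln (wy$i$j))\<bar> powr pw) powr (1/pw)"
      by (simp add: vnorm_def geo_def xx yy)
    also have "\<dots> \<le> rw"
      using wx wy t p by (intro geo_norm[where a="\<lambda>j. wx$i$j" and b="\<lambda>j. wy$i$j"]) (auto simp: vnorm_def)
    finally show ?thesis .
  qed
  have r2: "mnorm pu (snd (geo x y t)) \<le> ru"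
  proof -
    have "mnorm pu (snd (geo x y t)) = (\<Sum>(a,b)\<in>UNIV\<times>UNIV. \<bar>exp ((1 - t) * ln (ux$a$b) + t * ln (uy$a$b))\<bar> powr pu) powr (1/pu)"
      by (simp add: mnorm_def geo_def xx yy sum.cartesian_product)
    also have "\<dots> = (\<Sum>z\<in>UNIV\<times>UNIV. \<bar>exp ((1 - t) * ln (ux$fst z$snd z) + t * ln (uy$fst z$snd z))\<bar> powr pu) powr (1/pu)"
      by (simp add: case_prod_beta)
    also have "\<dots> \<le> ru"
    proof (rule geo_norm[where a="\<lambda>z. ux$fst z$snd z" and b="\<lambda>z. uy$fst z$snd z"])
      show "(\<Sum>z\<in>UNIV\<times>UNIV. \<bar>ux$fst z$snd z\<bar> powr pu) powr (1/pu) \<le> ru"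
        using wx(4) by (simp add: mnorm_def sum.cartesian_product case_prod_beta)
      show "(\<Sum>z\<in>UNIV\<times>UNIV. \<bar>uy$fst z$snd z\<bar> powr pu) powr (1/pu) \<le> ru"
        using wy(4) by (simp add: mnorm_def sum.cartesian_product case_prod_beta)
    qed (use wx wy t p in auto)
    finally show ?thesis .
  qed
  show ?thesis using r1 r2 unfolding Bpp_def Vpp_def
    by (cases "geo x y t") (auto simp: geo_def)
qed


lemma geo_expand: "geo x y t = (\<Sum>i\<in>UNIV. \<Sum>j\<in>UNIV. exp ((1 - t) * ln (fst x$i$j) + t * ln (fst y$i$j)) *\<^sub>R ew i j)
    + (\<Sum>a\<in>UNIV. \<Sum>b\<in>UNIV. exp ((1 - t) * ln (snd x$a$b) + t * ln (snd y$a$b)) *\<^sub>R eu a b)"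
  unfolding geo_def by (subst pt_expand) simp

definition geoV :: "(real^'n^'k) \<times> (real^'d^'n) \<Rightarrow> (real^'n^'k) \<times> (real^'d^'n) \<Rightarrow> real \<Rightarrow> (real^'n^'k) \<times> (real^'d^'n)" where
  "geoV x y t = ((\<chi> i j. exp ((1 - t) * ln (fst x$i$j) + t * ln (fst y$i$j)) * (ln (fst y$i$j) - ln (fst x$i$j))),
                (\<chi> a b. exp ((1 - t) * ln (snd x$a$b) + t * ln (snd y$a$b)) * (ln (snd y$a$b) - ln (snd x$a$b))))"

lemma exp_line_deriv:
  "((\<lambda>t. exp ((1 - t) * la + t * lb)) has_real_derivative exp ((1 - t) * la + t * lb) * (lb - la)) (at t)"
  by (auto intro!: derivative_eq_intros simp: algebra_simps)

lemma geo_deriv: "(geo x y has_derivative (\<lambda>s. s *\<^sub>R geoV x y t)) (at t)"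
proof -
  have e: "geo x y = (\<lambda>t. (\<Sum>i\<in>UNIV. \<Sum>j\<in>UNIV. exp ((1 - t) * ln (fst x$i$j) + t * ln (fst y$i$j)) *\<^sub>R ew i j)
    + (\<Sum>a\<in>UNIV. \<Sum>b\<in>UNIV. exp ((1 - t) * ln (snd x$a$b) + t * ln (snd y$a$b)) *\<^sub>R eu a b))"
    using geo_expand by blast
  have V: "geoV x y t = (\<Sum>i\<in>UNIV. \<Sum>j\<in>UNIV. (exp ((1 - t) * ln (fst x$i$j) + t * ln (fst y$i$j)) * (ln (fst y$i$j) - ln (fst x$i$j))) *\<^sub>R ew i j)
    + (\<Sum>a\<in>UNIV. \<Sum>b\<in>UNIV. (exp ((1 - t) * ln (snd x$a$b) + t * ln (snd y$a$b)) * (ln (snd y$a$b) - ln (snd x$a$b))) *\<^sub>R eu a b)"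
    unfolding geoV_def by (subst pt_expand) simp
  have d: "((\<lambda>t. exp ((1 - t) * la + t * lb) *\<^sub>R E) has_derivative (\<lambda>s. (s * (exp ((1 - t) * la + t * lb) * (lb - la))) *\<^sub>R E)) (at t)"
    for la lb and E :: "(real^'n^'k) \<times> (real^'d^'n)"
  proof -
    have "((\<lambda>t. exp ((1 - t) * la + t * lb)) has_derivative (\<lambda>s. s * (exp ((1 - t) * la + t * lb) * (lb - la)))) (at t)"
    proof -
      have h0: "((\<lambda>t. exp ((1 - t) * la + t * lb)) has_derivative (*) (exp ((1 - t) * la + t * lb) * (lb - la))) (at t)"
        using exp_line_deriv[of la lb t] unfolding has_field_derivative_def .
      have eq: "(*) (exp ((1 - t) * la + t * lb) * (lb - la)) = (\<lambda>s. s * (exp ((1 - t) * la + t * lb) * (lb - la)))"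
        by (rule ext) (simp only: mult.commute)
      show ?thesis using h0 unfolding eq .
    qed
    then show ?thesis by (rule has_derivative_scaleR_left)
  qed
  have "((\<lambda>t. (\<Sum>i\<in>UNIV. \<Sum>j\<in>UNIV. exp ((1 - t) * ln (fst x$i$j) + t * ln (fst y$i$j)) *\<^sub>R ew i j)
    + (\<Sum>a\<in>UNIV. \<Sum>b\<in>UNIV. exp ((1 - t) * ln (snd x$a$b) + t * ln (snd y$a$b)) *\<^sub>R eu a b)) has_derivative
    (\<lambda>s. (\<Sum>i\<in>UNIV. \<Sum>j\<in>UNIV. (s * (exp ((1 - t) * ln (fst x$i$j) + t * ln (fst y$i$j)) * (ln (fst y$i$j) - ln (fst x$i$j)))) *\<^sub>R ew i j)
    + (\<Sum>a\<in>UNIV. \<Sum>b\<in>UNIV. (s * (exp ((1 - t) * ln (snd x$a$b) + t * ln (snd y$a$b)) * (ln (snd y$a$b) - ln (snd x$a$b)))) *\<^sub>R eu a b))) (at t)"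
    by (intro has_derivative_add has_derivative_sum d)
  moreover have "(\<lambda>s. (\<Sum>i\<in>UNIV. \<Sum>j\<in>UNIV. (s * (exp ((1 - t) * ln (fst x$i$j) + t * ln (fst y$i$j)) * (ln (fst y$i$j) - ln (fst x$i$j)))) *\<^sub>R ew i j)
    + (\<Sum>a\<in>UNIV. \<Sum>b\<in>UNIV. (s * (exp ((1 - t) * ln (snd x$a$b) + t * ln (snd y$a$b)) * (ln (snd y$a$b) - ln (snd x$a$b)))) *\<^sub>R eu a b))
    = (\<lambda>s. s *\<^sub>R geoV x y t)"
    unfolding V by (simp add: scaleR_add_right scaleR_sum_right)
  ultimately show ?thesis unfolding e by simp
qed


lemma Max1_ge: fixes f :: "'a::finite \<Rightarrow> real" shows "f l \<le> Max {f l | l. True}"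
proof -
  have "{f l | l. True} = range f" by auto
  then show ?thesis by simp
qed

lemma Max1_le: fixes f :: "'a::finite \<Rightarrow> real" assumes "\<forall>l. f l \<le> B" shows "Max {f l | l. True} \<le> B"
proof -
  have "{f l | l. True} = range f" by auto
  then show ?thesis using assms by simp
qed

lemma Max2_ge: fixes f :: "'a::finite \<Rightarrow> 'b::finite \<Rightarrow> real" shows "f a b \<le> Max {f a b | a b. True}"
proof -
  have "{f a b | a b. True} = (\<lambda>z. f (fst z) (snd z)) ` UNIV"
  proof (rule set_eqI, rule iffI)
    fix v assume "v \<in> {f a b | a b. True}"
    then obtain a b where "v = f a b" by blast
    then show "v \<in> (\<lambda>z. f (fst z) (snd z)) ` UNIV" by (intro image_eqI[of _ _ "(a,b)"]) auto
  qed auto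
  moreover have "f a b \<in> (\<lambda>z. f (fst z) (snd z)) ` UNIV" by (rule image_eqI[of _ _ "(a,b)"]) auto
  ultimately show ?thesis by simp
qed

lemma Max2_le: fixes f :: "'a::finite \<Rightarrow> 'b::finite \<Rightarrow> real" assumes "\<forall>a b. f a b \<le> B" shows "Max {f a b | a b. True} \<le> B"
proof -
  have "{f a b | a b. True} = (\<lambda>z. f (fst z) (snd z)) ` UNIV"
  proof (rule set_eqI, rule iffI)
    fix v assume "v \<in> {f a b | a b. True}"
    then obtain a b where "v = f a b" by blast
    then show "v \<in> (\<lambda>z. f (fst z) (snd z)) ` UNIV" by (intro image_eqI[of _ _ "(a,b)"]) auto
  qed auto
  then show ?thesis using assms by simp
qed

definition Mw :: "(real^'n^'k) \<times> (real^'d^'n) \<Rightarrow> (real^'n^'k) \<times> (real^'d^'n) \<Rightarrow> 'k \<Rightarrow> real" where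
  "Mw x y k = Max {\<bar>ln (fst x $ k $ j) - ln (fst y $ k $ j)\<bar> | j. True}"
definition Mu :: "(real^'n^'k) \<times> (real^'d^'n) \<Rightarrow> (real^'n^'k) \<times> (real^'d^'n) \<Rightarrow> real" where
  "Mu x y = Max {\<bar>ln (snd x $ a $ b) - ln (snd y $ a $ b)\<bar> | a b. True}"

lemma mu_gamma_eq: "mu_gamma \<gamma> x y = (\<Sum>i\<in>UNIV. \<gamma>$(Some i) * Mw x y i) + \<gamma>$None * Mu x y"
  unfolding mu_gamma_def Mw_def Mu_def ..

lemma Mw_ge: "\<bar>ln (fst x $ k $ j) - ln (fst y $ k $ j)\<bar> \<le> Mw x y k"
  unfolding Mw_def by (rule Max1_ge)
lemma Mu_ge: "\<bar>ln (snd x $ a $ b) - ln (snd y $ a $ b)\<bar> \<le> Mu x y"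
  unfolding Mu_def by (rule Max2_ge)
lemma Mw_nonneg: "Mw x y k \<ge> 0" using Mw_ge[of x k undefined y] by linarith
lemma Mu_nonneg: "Mu x y \<ge> 0" using Mu_ge[of x undefined undefined y] by linarith

lemma geo_0: assumes "x \<in> Vpp" shows "geo x y 0 = x"
  using assms by (cases x) (simp add: geo_def Vpp_def vec_eq_iff)
lemma geo_1: assumes "y \<in> Vpp" shows "geo x y 1 = y"
  using assms by (cases y) (simp add: geo_def Vpp_def vec_eq_iff)

lemma sum_bound1:
  fixes c d e :: "'j \<Rightarrow> real"
  assumes "\<forall>j. \<bar>e j\<bar> \<le> M" "\<forall>j. d j \<ge> 0"
  shows "\<bar>\<Sum>j\<in>UNIV. c j * d j * e j\<bar> \<le> (\<Sum>j\<in>UNIV. \<bar>c j\<bar> * d j) * M"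
proof -
  have "\<bar>\<Sum>j\<in>UNIV. c j * d j * e j\<bar> \<le> (\<Sum>j\<in>UNIV. \<bar>c j * d j * e j\<bar>)" by (rule sum_abs)
  also have "\<dots> \<le> (\<Sum>j\<in>UNIV. \<bar>c j\<bar> * d j * M)"
  proof (rule sum_mono)
    fix j
    have "\<bar>c j * d j * e j\<bar> = \<bar>c j\<bar> * d j * \<bar>e j\<bar>" using assms by (simp add: abs_mult)
    also have "\<dots> \<le> \<bar>c j\<bar> * d j * M" using assms by (intro mult_left_mono) auto
    finally show "\<bar>c j * d j * e j\<bar> \<le> \<bar>c j\<bar> * d j * M" .
  qed
  also have "\<dots> = (\<Sum>j\<in>UNIV. \<bar>c j\<bar> * d j) * M" by (simp add: sum_distrib_right)
  finally show ?thesis .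
qed

lemma sum_bound2:
  fixes c d e :: "'a \<Rightarrow> 'b \<Rightarrow> real"
  assumes "\<forall>a b. \<bar>e a b\<bar> \<le> M" "\<forall>a b. d a b \<ge> 0"
  shows "\<bar>\<Sum>a\<in>UNIV. \<Sum>b\<in>UNIV. c a b * d a b * e a b\<bar> \<le> (\<Sum>a\<in>UNIV. \<Sum>b\<in>UNIV. \<bar>c a b\<bar> * d a b) * M"
proof -
  have "\<bar>\<Sum>a\<in>UNIV. \<Sum>b\<in>UNIV. c a b * d a b * e a b\<bar> \<le> (\<Sum>a\<in>UNIV. \<bar>\<Sum>b\<in>UNIV. c a b * d a b * e a b\<bar>)" by (rule sum_abs)
  also have "\<dots> \<le> (\<Sum>a\<in>UNIV. (\<Sum>b\<in>UNIV. \<bar>c a b\<bar> * d a b) * M)"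
    by (rule sum_mono) (rule sum_bound1, use assms in auto)
  also have "\<dots> = (\<Sum>a\<in>UNIV. \<Sum>b\<in>UNIV. \<bar>c a b\<bar> * d a b) * M" by (simp add: sum_distrib_right)
  finally show ?thesis .
qed

lemma comp_contract:
  fixes F :: "(real^'n^'k) \<times> (real^'d^'n) \<Rightarrow> real"
  assumes xB: "x \<in> Bpp pw pu rw ru" and yB: "y \<in> Bpp pw pu rw ru" and p: "pw > 0" "pu > 0"
    and dif: "\<forall>z\<in>Bpp pw pu rw ru. F differentiable (at z) \<and> F z > 0"
    and b1: "\<forall>z\<in>Bpp pw pu rw ru. \<forall>k. (\<Sum>l\<in>UNIV. \<bar>dw F z k l\<bar> * fst z $ k $ l) \<le> \<alpha> k * F z"
    and b2: "\<forall>z\<in>Bpp pw pu rw ru. (\<Sum>a\<in>UNIV. \<Sum>b\<in>UNIV. \<bar>du F z a b\<bar> * snd z $ a $ b) \<le> \<beta> * F z"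
  shows "\<bar>ln (F y) - ln (F x)\<bar> \<le> (\<Sum>k\<in>UNIV. \<alpha> k * Mw x y k) + \<beta> * Mu x y"
proof -
  define DF where "DF t = frechet_derivative F (at (geo x y t))" for t
  define h where "h t = ln (F (geo x y t))" for t
  define h' where "h' t = DF t (geoV x y t) / F (geo x y t)" for t
  have gB: "geo x y t \<in> Bpp pw pu rw ru" if "0 \<le> t" "t \<le> 1" for t
    using geo_in_B[OF xB yB p that] .
  have DFd: "(F has_derivative DF t) (at (geo x y t))" if "0 \<le> t" "t \<le> 1" for t
    unfolding DF_def using dif gB[OF that] frechet_derivative_works by blast
  have hd: "DERIV h t :> h' t" if "0 \<le> t" "t \<le> 1" for t
  proof -
    have c: "((\<lambda>t. F (geo x y t)) has_derivative (\<lambda>s. DF t (s *\<^sub>R geoV x y t))) (at t)"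
      using has_derivative_compose[OF geo_deriv DFd[OF that]] .
    have "(\<lambda>s. DF t (s *\<^sub>R geoV x y t)) = (*) (DF t (geoV x y t))"
      using has_derivative_linear[OF DFd[OF that]] by (auto simp: linear_scale fun_eq_iff)
    then have c2: "((\<lambda>t. F (geo x y t)) has_real_derivative DF t (geoV x y t)) (at t)"
      using c unfolding has_field_derivative_def by simp
    have pos: "F (geo x y t) > 0" using dif gB[OF that] by blast
    show ?thesis unfolding h_def h'_def
      using DERIV_chain'[OF c2 DERIV_ln_divide[OF pos]] by (simp add: divide_inverse mult.commute)
  qed
  obtain z where z: "0 < z" "z < 1" "h 1 - h 0 = (1 - 0) * h' z"
    using MVT2[of 0 1 h h'] hd by auto
  have x0: "x \<in> Vpp" using xB by (auto simp: Bpp_def)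
  have y0: "y \<in> Vpp" using yB by (auto simp: Bpp_def)
  have hh: "h 1 - h 0 = ln (F y) - ln (F x)" unfolding h_def using geo_0[OF x0] geo_1[OF y0] by simp
  define g where "g = geo x y z"
  have gz: "g \<in> Bpp pw pu rw ru" unfolding g_def using gB z by auto
  have Fg: "F g > 0" using dif gz by blast
  have lin: "linear (DF z)" using has_derivative_linear[OF DFd] z by auto
  have dwg: "dw F g i j = DF z (ew i j)" for i j unfolding g_def by (rule dw_eq[OF DFd]) (use z in auto)
  have dug: "du F g a b = DF z (eu a b)" for a b unfolding g_def by (rule du_eq[OF DFd]) (use z in auto)
  have gw: "fst g $ i $ j = exp ((1 - z) * ln (fst x$i$j) + z * ln (fst y$i$j))" for i j
    unfolding g_def geo_def by simp
  have gu: "snd g $ a $ b = exp ((1 - z) * ln (snd x$a$b) + z * ln (snd y$a$b))" for a b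
    unfolding g_def geo_def by simp
  have gpos: "\<forall>i j. fst g $ i $ j \<ge> 0" "\<forall>a b. snd g $ a $ b \<ge> 0"
    using gz by (auto simp: Bpp_def Vpp_def less_imp_le)
  have DFV: "DF z (geoV x y z) = (\<Sum>i\<in>UNIV. \<Sum>j\<in>UNIV. dw F g i j * fst g $ i $ j * (ln (fst y$i$j) - ln (fst x$i$j)))
      + (\<Sum>a\<in>UNIV. \<Sum>b\<in>UNIV. du F g a b * snd g $ a $ b * (ln (snd y$a$b) - ln (snd x$a$b)))"
    unfolding geoV_def lin_expand[OF lin] by (simp add: dwg dug gw gu mult_ac)
  have bw: "\<bar>\<Sum>j\<in>UNIV. dw F g i j * fst g $ i $ j * (ln (fst y$i$j) - ln (fst x$i$j))\<bar> \<le> \<alpha> i * F g * Mw x y i" for i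
  proof -
    have "\<bar>\<Sum>j\<in>UNIV. dw F g i j * fst g $ i $ j * (ln (fst y$i$j) - ln (fst x$i$j))\<bar>
       \<le> (\<Sum>j\<in>UNIV. \<bar>dw F g i j\<bar> * fst g $ i $ j) * Mw x y i"
      using gpos Mw_ge[of x i _ y] by (intro sum_bound1) (auto simp: abs_minus_commute)
    also have "\<dots> \<le> \<alpha> i * F g * Mw x y i"
      using b1 gz Mw_nonneg[of x y i] by (intro mult_right_mono) auto
    finally show ?thesis .
  qed
  have bu: "\<bar>\<Sum>a\<in>UNIV. \<Sum>b\<in>UNIV. du F g a b * snd g $ a $ b * (ln (snd y$a$b) - ln (snd x$a$b))\<bar> \<le> \<beta> * F g * Mu x y"
  proof -
    have "\<bar>\<Sum>a\<in>UNIV. \<Sum>b\<in>UNIV. du F g a b * snd g $ a $ b * (ln (snd y$a$b) - ln (snd x$a$b))\<bar>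
       \<le> (\<Sum>a\<in>UNIV. \<Sum>b\<in>UNIV. \<bar>du F g a b\<bar> * snd g $ a $ b) * Mu x y"
      using gpos Mu_ge[of x _ _ y] by (intro sum_bound2) (auto simp: abs_minus_commute)
    also have "\<dots> \<le> \<beta> * F g * Mu x y"
      using b2 gz Mu_nonneg[of x y] by (intro mult_right_mono) auto
    finally show ?thesis .
  qed
  have "\<bar>DF z (geoV x y z)\<bar> \<le> (\<Sum>i\<in>UNIV. \<alpha> i * F g * Mw x y i) + \<beta> * F g * Mu x y"
  proof -
    have "\<bar>DF z (geoV x y z)\<bar> \<le> \<bar>\<Sum>i\<in>UNIV. \<Sum>j\<in>UNIV. dw F g i j * fst g $ i $ j * (ln (fst y$i$j) - ln (fst x$i$j))\<bar>
        + \<bar>\<Sum>a\<in>UNIV. \<Sum>b\<in>UNIV. du F g a b * snd g $ a $ b * (ln (snd y$a$b) - ln (snd x$a$b))\<bar>"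
      unfolding DFV by (rule abs_triangle_ineq)
    also have "\<dots> \<le> (\<Sum>i\<in>UNIV. \<bar>\<Sum>j\<in>UNIV. dw F g i j * fst g $ i $ j * (ln (fst y$i$j) - ln (fst x$i$j))\<bar>) + \<beta> * F g * Mu x y"
      using bu sum_abs by (intro add_mono) auto
    also have "\<dots> \<le> (\<Sum>i\<in>UNIV. \<alpha> i * F g * Mw x y i) + \<beta> * F g * Mu x y"
      using bw by (intro add_mono sum_mono) auto
    finally show ?thesis .
  qed
  also have "\<dots> = ((\<Sum>k\<in>UNIV. \<alpha> k * Mw x y k) + \<beta> * Mu x y) * F g"
  proof -
    have e: "(\<Sum>i\<in>UNIV. \<alpha> i * F g * Mw x y i) = (\<Sum>i\<in>UNIV. \<alpha> i * Mw x y i) * F g"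
      by (simp add: sum_distrib_right sum_distrib_left[symmetric] mult_ac)
    show ?thesis unfolding e by (simp add: ring_distribs mult_ac)
  qed
  finally have A: "\<bar>DF z (geoV x y z)\<bar> \<le> ((\<Sum>k\<in>UNIV. \<alpha> k * Mw x y k) + \<beta> * Mu x y) * F g" .
  have "h' z = DF z (geoV x y z) / F g" unfolding h'_def g_def ..
  then have "\<bar>h' z\<bar> = \<bar>DF z (geoV x y z)\<bar> / F g" using Fg by simp
  then have "\<bar>h' z\<bar> \<le> (\<Sum>k\<in>UNIV. \<alpha> k * Mw x y k) + \<beta> * Mu x y"
    using A Fg by (simp only: pos_divide_le_eq)
  then show ?thesis using z hh by simp
qed


lemma sum_option: fixes f :: "'a::finite option \<Rightarrow> 'b::comm_monoid_add"
  shows "(\<Sum>r\<in>UNIV. f r) = f None + (\<Sum>i\<in>UNIV. f (Some i))"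
proof -
  have "(\<Sum>r\<in>UNIV. f r) = (\<Sum>r\<in>insert None (range Some). f r)" by (simp add: UNIV_option_conv[symmetric])
  also have "\<dots> = f None + (\<Sum>r\<in>range Some. f r)" by (rule sum.insert) auto
  also have "(\<Sum>r\<in>range Some. f r) = (\<Sum>i\<in>UNIV. f (Some i))" by (subst sum.reindex) auto
  finally show ?thesis .
qed

locale setting =
  fixes \<Phi> :: "(real^'n::finite^'k::finite) \<times> (real^'d::finite^'n) \<Rightarrow> real"
    and pw pu rw ru :: real
    and A :: "real^('k option)^('k option)"
    and \<gamma> :: "real^('k option)"
    and \<theta> :: real
    and U :: "((real^'n^'k) \<times> (real^'d^'n)) set"
    and f' :: "(real^'n^'k) \<times> (real^'d^'n) \<Rightarrow> ((real^'n^'k) \<times> (real^'d^'n)) \<Rightarrow>\<^sub>L real"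
    and f'' :: "(real^'n^'k) \<times> (real^'d^'n) \<Rightarrow> ((real^'n^'k) \<times> (real^'d^'n)) \<Rightarrow>\<^sub>L (((real^'n^'k) \<times> (real^'d^'n)) \<Rightarrow>\<^sub>L real)"
  assumes pw: "pw > 1" and pu: "pu > 1" and rw: "rw > 0" and ru: "ru > 0"
    and C1g: "\<exists>g. \<forall>x. (\<Phi> has_derivative blinfun_apply (g x)) (at x)"
    and Uo: "open U" and BU: "Bpp pw pu rw ru \<subseteq> U"
    and d1: "\<forall>x\<in>U. (\<Phi> has_derivative blinfun_apply (f' x)) (at x)"
    and d2: "\<forall>x\<in>U. (f' has_derivative blinfun_apply (f'' x)) (at x)"
    and grad_pos: "\<forall>x \<in> Splus pw pu rw ru \<union> Bpp pw pu rw ru.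
                     (\<forall>i j. dw \<Phi> x i j > 0) \<and> (\<forall>a b. du \<Phi> x a b > 0)"
    and H1: "\<forall>x\<in>Bpp pw pu rw ru. \<forall>i k j.
        (\<Sum>l\<in>UNIV. \<bar>dw (\<lambda>y. fst (GPhi pw pu rw ru \<Phi> y) $ i $ j) x k l\<bar> * fst x $ k $ l)
          \<le> A$(Some i)$(Some k) * fst (GPhi pw pu rw ru \<Phi> x) $ i $ j"
    and H2: "\<forall>x\<in>Bpp pw pu rw ru. \<forall>i j.
        (\<Sum>a\<in>UNIV. \<Sum>b\<in>UNIV. \<bar>du (\<lambda>y. fst (GPhi pw pu rw ru \<Phi> y) $ i $ j) x a b\<bar> * snd x $ a $ b)
          \<le> A$(Some i)$None * fst (GPhi pw pu rw ru \<Phi> x) $ i $ j"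
    and H3: "\<forall>x\<in>Bpp pw pu rw ru. \<forall>k a b.
        (\<Sum>l\<in>UNIV. \<bar>dw (\<lambda>y. snd (GPhi pw pu rw ru \<Phi> y) $ a $ b) x k l\<bar> * fst x $ k $ l)
          \<le> A$None$(Some k) * snd (GPhi pw pu rw ru \<Phi> x) $ a $ b"
    and H4: "\<forall>x\<in>Bpp pw pu rw ru. \<forall>a b.
        (\<Sum>a'\<in>UNIV. \<Sum>b'\<in>UNIV. \<bar>du (\<lambda>y. snd (GPhi pw pu rw ru \<Phi> y) $ a $ b) x a' b'\<bar> * snd x $ a' $ b')
          \<le> A$None$None * snd (GPhi pw pu rw ru \<Phi> x) $ a $ b"
    and gamma_pos: "\<forall>r. \<gamma>$r > 0"
    and eig: "\<forall>s. (\<Sum>r\<in>UNIV. A$r$s * \<gamma>$r) = \<theta> * \<gamma>$s"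
    and th0: "0 \<le> \<theta>" and th1: "\<theta> < 1"
begin

abbreviation "G \<equiv> GPhi pw pu rw ru \<Phi>"
abbreviation "B \<equiv> Bpp pw pu rw ru"
abbreviation "SP \<equiv> Spp pw pu rw ru"

lemma gpB: "z \<in> B \<Longrightarrow> (\<forall>i j. dw \<Phi> z i j > 0) \<and> (\<forall>a b. du \<Phi> z a b > 0)"
  using grad_pos by blast

lemma G_SP: "z \<in> B \<Longrightarrow> G z \<in> SP"
  using G_in_Spp[OF pw pu rw ru] gpB by blast

lemma SP_B: "SP \<subseteq> B"
  unfolding Spp_def Splus_def Bpp_def by auto

lemma G_fst_diff: assumes "z \<in> B" shows "(\<lambda>y. fst (G y) $ i $ j) differentiable (at z)"
proof -
  have zU: "z \<in> U" using assms BU by auto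
  have e: "(\<lambda>y. fst (G y) $ i $ j) = (\<lambda>y. rw / vnorm pw (\<chi> l. psi (conj_exp pw) (dw \<Phi> y i l)) * psi (conj_exp pw) (dw \<Phi> y i j))"
    by (simp add: G_fst vpsi_def gradw_def)
  show ?thesis unfolding e
    using gpB[OF assms] dw_du_diff(1)[OF Uo zU d1 d2] pw
    by (intro Gcomp_diff_v[where g="\<lambda>l y. dw \<Phi> y i l"]) auto
qed

lemma G_snd_diff: assumes "z \<in> B" shows "(\<lambda>y. snd (G y) $ a $ b) differentiable (at z)"
proof -
  have zU: "z \<in> U" using assms BU by auto
  have e: "(\<lambda>y. snd (G y) $ a $ b) = (\<lambda>y. ru / mnorm pu (\<chi> a b. psi (conj_exp pu) (du \<Phi> y a b)) * psi (conj_exp pu) (du \<Phi> y a b))"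
    by (simp add: G_snd mpsi_def gradu_def)
  show ?thesis unfolding e
    using gpB[OF assms] dw_du_diff(2)[OF Uo zU d1 d2] pu
    by (intro Gcomp_diff_m[where g="\<lambda>a b y. du \<Phi> y a b"]) auto
qed

lemma G_pos: assumes "z \<in> B" shows "\<forall>i j. fst (G z) $ i $ j > 0" "\<forall>a b. snd (G z) $ a $ b > 0"
  using G_SP[OF assms] by (auto simp: Spp_def Vpp_def)

lemma Mw_contract: assumes "x \<in> B" "y \<in> B"
  shows "Mw (G x) (G y) i \<le> (\<Sum>k\<in>UNIV. A$(Some i)$(Some k) * Mw x y k) + A$(Some i)$None * Mu x y"
proof -
  have "\<forall>j. \<bar>ln (fst (G x) $ i $ j) - ln (fst (G y) $ i $ j)\<bar> \<le> (\<Sum>k\<in>UNIV. A$(Some i)$(Some k) * Mw x y k) + A$(Some i)$None * Mu x y"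
  proof
  fix j
  have "\<bar>ln (fst (G y) $ i $ j) - ln (fst (G x) $ i $ j)\<bar> \<le> (\<Sum>k\<in>UNIV. A$(Some i)$(Some k) * Mw x y k) + A$(Some i)$None * Mu x y"
    apply (rule comp_contract[where F="\<lambda>y. fst (G y) $ i $ j"])
    using assms pw pu G_fst_diff G_pos H1 H2 by auto
  then show "\<bar>ln (fst (G x) $ i $ j) - ln (fst (G y) $ i $ j)\<bar> \<le> (\<Sum>k\<in>UNIV. A$(Some i)$(Some k) * Mw x y k) + A$(Some i)$None * Mu x y"
    by (simp add: abs_minus_commute)
  qed
  then show ?thesis unfolding Mw_def by (rule Max1_le)
qed

lemma Mu_contract: assumes "x \<in> B" "y \<in> B"
  shows "Mu (G x) (G y) \<le> (\<Sum>k\<in>UNIV. A$None$(Some k) * Mw x y k) + A$None$None * Mu x y"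
proof -
  have "\<forall>a b. \<bar>ln (snd (G x) $ a $ b) - ln (snd (G y) $ a $ b)\<bar> \<le> (\<Sum>k\<in>UNIV. A$None$(Some k) * Mw x y k) + A$None$None * Mu x y"
  proof (intro allI)
  fix a b
  have "\<bar>ln (snd (G y) $ a $ b) - ln (snd (G x) $ a $ b)\<bar> \<le> (\<Sum>k\<in>UNIV. A$None$(Some k) * Mw x y k) + A$None$None * Mu x y"
    apply (rule comp_contract[where F="\<lambda>y. snd (G y) $ a $ b"])
    using assms pw pu G_snd_diff G_pos H3 H4 by auto
  then show "\<bar>ln (snd (G x) $ a $ b) - ln (snd (G y) $ a $ b)\<bar> \<le> (\<Sum>k\<in>UNIV. A$None$(Some k) * Mw x y k) + A$None$None * Mu x y"
    by (simp add: abs_minus_commute)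
  qed
  then show ?thesis unfolding Mu_def by (rule Max2_le)
qed

lemma contract: assumes "x \<in> B" "y \<in> B"
  shows "mu_gamma \<gamma> (G x) (G y) \<le> \<theta> * mu_gamma \<gamma> x y"
proof -
  let ?W = "\<lambda>k. Mw x y k" and ?U = "Mu x y"
  have "mu_gamma \<gamma> (G x) (G y) = (\<Sum>i\<in>UNIV. \<gamma>$(Some i) * Mw (G x) (G y) i) + \<gamma>$None * Mu (G x) (G y)"
    by (rule mu_gamma_eq)
  also have "\<dots> \<le> (\<Sum>i\<in>UNIV. \<gamma>$(Some i) * ((\<Sum>k\<in>UNIV. A$(Some i)$(Some k) * ?W k) + A$(Some i)$None * ?U))
       + \<gamma>$None * ((\<Sum>k\<in>UNIV. A$None$(Some k) * ?W k) + A$None$None * ?U)"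
    using Mw_contract[OF assms] Mu_contract[OF assms] gamma_pos
    by (intro add_mono sum_mono mult_left_mono) (auto intro: less_imp_le)
  also have "\<dots> = (\<Sum>k\<in>UNIV. (\<Sum>r\<in>UNIV. A$r$(Some k) * \<gamma>$r) * ?W k) + (\<Sum>r\<in>UNIV. A$r$None * \<gamma>$r) * ?U"
  proof -
    have s1: "(\<Sum>i\<in>UNIV. \<gamma>$(Some i) * ((\<Sum>k\<in>UNIV. A$(Some i)$(Some k) * ?W k) + A$(Some i)$None * ?U))
        = (\<Sum>k\<in>UNIV. (\<Sum>i\<in>UNIV. A$(Some i)$(Some k) * \<gamma>$(Some i)) * ?W k) + (\<Sum>i\<in>UNIV. A$(Some i)$None * \<gamma>$(Some i)) * ?U"
    proof -
      have "(\<Sum>i\<in>UNIV. \<gamma>$(Some i) * ((\<Sum>k\<in>UNIV. A$(Some i)$(Some k) * ?W k) + A$(Some i)$None * ?U))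
          = (\<Sum>i\<in>UNIV. \<Sum>k\<in>UNIV. \<gamma>$(Some i) * A$(Some i)$(Some k) * ?W k) + (\<Sum>i\<in>UNIV. A$(Some i)$None * \<gamma>$(Some i) * ?U)"
        by (simp add: sum.distrib distrib_left sum_distrib_left mult_ac)
      also have "(\<Sum>i\<in>UNIV. \<Sum>k\<in>UNIV. \<gamma>$(Some i) * A$(Some i)$(Some k) * ?W k) = (\<Sum>k\<in>UNIV. \<Sum>i\<in>UNIV. \<gamma>$(Some i) * A$(Some i)$(Some k) * ?W k)"
        by (rule sum.swap)
      finally show ?thesis by (simp add: sum_distrib_left mult_ac)
    qed
    have s2: "\<gamma>$None * ((\<Sum>k\<in>UNIV. A$None$(Some k) * ?W k) + A$None$None * ?U)
        = (\<Sum>k\<in>UNIV. (A$None$(Some k) * \<gamma>$None) * ?W k) + (A$None$None * \<gamma>$None) * ?U"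
      by (simp add: distrib_left sum_distrib_left mult_ac)
    show ?thesis unfolding s1 s2 sum_option[where f="\<lambda>r. A$r$(Some _) * \<gamma>$r"] sum_option[where f="\<lambda>r. A$r$None * \<gamma>$r"]
      by (simp add: distrib_right sum.distrib)
  qed
  also have "\<dots> = \<theta> * mu_gamma \<gamma> x y"
    unfolding mu_gamma_eq using eig by (simp add: distrib_left sum_distrib_left mult_ac)
  finally show ?thesis .
qed

end


lemma ln_gap: fixes a b r :: real assumes "0 < a" "0 < b" "a \<le> r" "b \<le> r"
  shows "\<bar>a - b\<bar> \<le> r * \<bar>ln a - ln b\<bar>"
proof -
  have key: "v - u \<le> r * (ln v - ln u)" if "0 < u" "u \<le> v" "v \<le> r" for u v :: real
  proof -
    have "ln (u / v) \<le> u / v - 1" using that by (intro ln_le_minus_one) auto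
    then have "ln u - ln v \<le> (u - v) / v" using that by (simp add: ln_div diff_divide_distrib)
    moreover have "(v - u) / v = - ((u - v) / v)" by (simp add: minus_divide_left)
    ultimately have "(v - u) / v \<le> ln v - ln u" by linarith
    then have "v - u \<le> v * (ln v - ln u)" using that by (simp add: divide_le_eq mult.commute)
    also have "\<dots> \<le> r * (ln v - ln u)"
      using that by (intro mult_right_mono) auto
    finally show ?thesis .
  qed
  show ?thesis
  proof (cases "a \<le> b")
    case True
    then show ?thesis using key[of a b] assms by (simp add: abs_if)
  next
    case False
    then show ?thesis using key[of b a] assms by (simp add: abs_if)
  qed
qed

lemma Mw_tri: "Mw x z k \<le> Mw x y k + Mw y z k"
  unfolding Mw_def[of x z]
proof (rule Max1_le, rule allI)
  fix j
  have "\<bar>ln (fst x $ k $ j) - ln (fst z $ k $ j)\<bar> \<le> \<bar>ln (fst x $ k $ j) - ln (fst y $ k $ j)\<bar> + \<bar>ln (fst y $ k $ j) - ln (fst z $ k $ j)\<bar>"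
    by linarith
  also have "\<dots> \<le> Mw x y k + Mw y z k" by (intro add_mono Mw_ge)
  finally show "\<bar>ln (fst x $ k $ j) - ln (fst z $ k $ j)\<bar> \<le> Mw x y k + Mw y z k" .
qed

lemma Mu_tri: "Mu x z \<le> Mu x y + Mu y z"
  unfolding Mu_def[of x z]
proof (rule Max2_le, intro allI)
  fix a b
  have "\<bar>ln (snd x $ a $ b) - ln (snd z $ a $ b)\<bar> \<le> \<bar>ln (snd x $ a $ b) - ln (snd y $ a $ b)\<bar> + \<bar>ln (snd y $ a $ b) - ln (snd z $ a $ b)\<bar>"
    by linarith
  also have "\<dots> \<le> Mu x y + Mu y z" by (intro add_mono Mu_ge)
  finally show "\<bar>ln (snd x $ a $ b) - ln (snd z $ a $ b)\<bar> \<le> Mu x y + Mu y z" .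
qed

lemma Mw_sym: "Mw x y k = Mw y x k"
  unfolding Mw_def by (simp add: abs_minus_commute)
lemma Mu_sym: "Mu x y = Mu y x"
  unfolding Mu_def by (simp add: abs_minus_commute)

lemma mu_sym: "mu_gamma \<gamma> x y = mu_gamma \<gamma> y x"
  unfolding mu_gamma_eq by (simp add: Mw_sym Mu_sym)

lemma mu_tri: assumes "\<forall>r. \<gamma>$r > 0"
  shows "mu_gamma \<gamma> x z \<le> mu_gamma \<gamma> x y + mu_gamma \<gamma> y z"
proof -
  have "mu_gamma \<gamma> x z \<le> (\<Sum>i\<in>UNIV. \<gamma>$(Some i) * (Mw x y i + Mw y z i)) + \<gamma>$None * (Mu x y + Mu y z)"
    unfolding mu_gamma_eq using assms Mw_tri[where x=x and y=y and z=z] Mu_tri[where x=x and y=y and z=z]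
    by (intro add_mono sum_mono mult_left_mono) (auto intro: less_imp_le)
  also have "\<dots> = mu_gamma \<gamma> x y + mu_gamma \<gamma> y z"
    unfolding mu_gamma_eq by (simp add: distrib_left sum.distrib)
  finally show ?thesis .
qed

lemma mu_nonneg: assumes "\<forall>r. \<gamma>$r > 0" shows "mu_gamma \<gamma> x y \<ge> 0"
  unfolding mu_gamma_eq using assms Mw_nonneg[of x y] Mu_nonneg[of x y]
  by (intro add_nonneg_nonneg sum_nonneg mult_nonneg_nonneg) (auto intro: less_imp_le)

lemma Mw_le_mu: assumes "\<forall>r. \<gamma>$r > 0" shows "\<gamma>$(Some i) * Mw x y i \<le> mu_gamma \<gamma> x y"
proof -
  have "\<gamma>$(Some i) * Mw x y i \<le> (\<Sum>i\<in>UNIV. \<gamma>$(Some i) * Mw x y i)"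
    using assms Mw_nonneg[of x y] by (intro member_le_sum) (auto intro: mult_nonneg_nonneg less_imp_le)
  moreover have "0 \<le> \<gamma>$None * Mu x y" using assms Mu_nonneg[of x y] by (auto intro: mult_nonneg_nonneg less_imp_le)
  ultimately show ?thesis unfolding mu_gamma_eq by linarith
qed

lemma Mu_le_mu: assumes "\<forall>r. \<gamma>$r > 0" shows "\<gamma>$None * Mu x y \<le> mu_gamma \<gamma> x y"
proof -
  have "0 \<le> (\<Sum>i\<in>UNIV. \<gamma>$(Some i) * Mw x y i)"
    using assms Mw_nonneg[of x y] by (intro sum_nonneg) (auto intro: mult_nonneg_nonneg less_imp_le)
  then show ?thesis unfolding mu_gamma_eq by linarith
qed

lemma mu_zero: assumes "\<forall>r. \<gamma>$r > 0" "x \<in> Vpp" "y \<in> Vpp" "mu_gamma \<gamma> x y \<le> 0"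
  shows "x = y"
proof -
  have m: "mu_gamma \<gamma> x y = 0" using assms(4) mu_nonneg[OF assms(1), of x y] by linarith
  have "\<gamma>$(Some i) * Mw x y i = 0" for i
    using Mw_le_mu[OF assms(1), of i x y] m assms(1) Mw_nonneg[of x y i]
    by (metis antisym mult_nonneg_nonneg less_imp_le)
  then have w0: "Mw x y i = 0" for i using assms(1) by (metis mult_eq_0_iff less_irrefl)
  have "\<gamma>$None * Mu x y = 0"
    using Mu_le_mu[OF assms(1), of x y] m assms(1) Mu_nonneg[of x y]
    by (metis antisym mult_nonneg_nonneg less_imp_le)
  then have u0: "Mu x y = 0" using assms(1) by (metis mult_eq_0_iff less_irrefl)
  have "fst x $ i $ j = fst y $ i $ j" for i j
  proof -
    have "\<bar>ln (fst x $ i $ j) - ln (fst y $ i $ j)\<bar> \<le> 0" using Mw_ge[of x i j y] w0[of i] by simp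
    then have "ln (fst x $ i $ j) = ln (fst y $ i $ j)" by simp
    then show ?thesis using assms(2,3) by (cases x, cases y) (auto simp: Vpp_def)
  qed
  moreover have "snd x $ a $ b = snd y $ a $ b" for a b
  proof -
    have "\<bar>ln (snd x $ a $ b) - ln (snd y $ a $ b)\<bar> \<le> 0" using Mu_ge[of x a b y] u0 by simp
    then have "ln (snd x $ a $ b) = ln (snd y $ a $ b)" by simp
    then show ?thesis using assms(2,3) by (cases x, cases y) (auto simp: Vpp_def)
  qed
  ultimately show ?thesis by (simp add: prod_eq_iff vec_eq_iff)
qed


lemma supnorm_bound:
  fixes x y :: "(real^'n::finite^'k::finite) \<times> (real^'d::finite^'n)"
  assumes gp: "\<forall>r. \<gamma>$r > 0" and x: "x \<in> Spp pw pu rw ru" and y: "y \<in> Spp pw pu rw ru"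
    and p: "pw > 0" "pu > 0" and c: "c > 0" "c \<le> \<gamma>$None / ru" "\<forall>t. c \<le> \<gamma>$(Some t) / rw"
    and r: "rw > 0" "ru > 0"
  shows "supnorm (x - y) \<le> mu_gamma \<gamma> x y / c"
proof -
  have xp: "\<forall>i j. fst x $ i $ j > 0" "\<forall>a b. snd x $ a $ b > 0" "\<forall>i. vnorm pw (fst x $ i) = rw" "mnorm pu (snd x) = ru"
    using x by (auto simp: Spp_def Splus_def Vpp_def)
  have yp: "\<forall>i j. fst y $ i $ j > 0" "\<forall>a b. snd y $ a $ b > 0" "\<forall>i. vnorm pw (fst y $ i) = rw" "mnorm pu (snd y) = ru"
    using y by (auto simp: Spp_def Splus_def Vpp_def)
  have w: "\<bar>fst x $ i $ j - fst y $ i $ j\<bar> \<le> mu_gamma \<gamma> x y / c" for i j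
  proof -
    have ex: "fst x $ i $ j \<le> rw" using vnorm_ge_entry[of "fst x $ i" j pw] xp p by (auto intro: less_imp_le)
    have ey: "fst y $ i $ j \<le> rw" using vnorm_ge_entry[of "fst y $ i" j pw] yp p by (auto intro: less_imp_le)
    have "\<bar>fst x $ i $ j - fst y $ i $ j\<bar> \<le> rw * \<bar>ln (fst x $ i $ j) - ln (fst y $ i $ j)\<bar>"
      using xp yp ex ey by (intro ln_gap) auto
    also have "\<dots> \<le> rw * Mw x y i" using r Mw_ge[of x i j y] by (intro mult_left_mono) auto
    also have "\<dots> \<le> \<gamma>$(Some i) * Mw x y i / c"
    proof -
      have "c * rw \<le> \<gamma>$(Some i)" using c(3) r by (simp add: le_divide_eq)
      then have "c * (rw * Mw x y i) \<le> \<gamma>$(Some i) * Mw x y i"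
        using Mw_nonneg[of x y i] by (metis mult.assoc mult_right_mono)
      then show ?thesis using c(1) by (simp add: le_divide_eq mult.commute)
    qed
    also have "\<dots> \<le> mu_gamma \<gamma> x y / c"
      using Mw_le_mu[OF gp, of i x y] c(1) by (simp add: divide_right_mono)
    finally show ?thesis .
  qed
  have u: "\<bar>snd x $ a $ b - snd y $ a $ b\<bar> \<le> mu_gamma \<gamma> x y / c" for a b
  proof -
    have "0 \<le> snd x $ a $ b" using xp(2) less_imp_le by blast
    then have ex: "snd x $ a $ b \<le> ru" using mnorm_ge_entry[of "snd x" a b pu] xp(4) p by simp
    have "0 \<le> snd y $ a $ b" using yp(2) less_imp_le by blast
    then have ey: "snd y $ a $ b \<le> ru" using mnorm_ge_entry[of "snd y" a b pu] yp(4) p by simp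
    have "\<bar>snd x $ a $ b - snd y $ a $ b\<bar> \<le> ru * \<bar>ln (snd x $ a $ b) - ln (snd y $ a $ b)\<bar>"
      using xp yp ex ey by (intro ln_gap) auto
    also have "\<dots> \<le> ru * Mu x y" using r Mu_ge[of x a b y] by (intro mult_left_mono) auto
    also have "\<dots> \<le> \<gamma>$None * Mu x y / c"
    proof -
      have "c * ru \<le> \<gamma>$None" using c(2) r by (simp add: le_divide_eq)
      then have "c * (ru * Mu x y) \<le> \<gamma>$None * Mu x y"
        using Mu_nonneg[of x y] by (metis mult.assoc mult_right_mono)
      then show ?thesis using c(1) by (simp add: le_divide_eq mult.commute)
    qed
    also have "\<dots> \<le> mu_gamma \<gamma> x y / c"
      using Mu_le_mu[OF gp, of x y] c(1) by (simp add: divide_right_mono)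
    finally show ?thesis .
  qed
  have "Max {\<bar>fst (x - y) $ i $ j\<bar> | i j. True} \<le> mu_gamma \<gamma> x y / c"
    using w by (intro Max2_le) simp
  moreover have "Max {\<bar>snd (x - y) $ a $ b\<bar> | a b. True} \<le> mu_gamma \<gamma> x y / c"
    using u by (intro Max2_le) simp
  ultimately show ?thesis unfolding supnorm_def by simp
qed

lemma cauchy_from_bound:
  fixes l :: "nat \<Rightarrow> real"
  assumes b: "\<And>k m. k \<le> m \<Longrightarrow> \<bar>l k - l m\<bar> \<le> \<theta> ^ k * D" and th: "0 \<le> \<theta>" "\<theta> < 1"
  shows "convergent l"
proof -
  have D: "D \<ge> 0" using b[of 0 0] by simp
  have t0: "(\<lambda>k. \<theta> ^ k * D) \<longlonglongrightarrow> 0"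
    using LIMSEQ_power_zero[of \<theta>] th by (auto intro: tendsto_mult_left_zero)
  have "Cauchy l"
  proof (rule metric_CauchyI)
    fix e :: real assume e: "e > 0"
    obtain N where N: "\<forall>k\<ge>N. \<theta> ^ k * D < e"
      using t0 e unfolding LIMSEQ_def by (auto simp: dist_real_def) (metis abs_of_nonneg D th(1) zero_le_power mult_nonneg_nonneg)
    show "\<exists>M. \<forall>m\<ge>M. \<forall>n\<ge>M. dist (l m) (l n) < e"
    proof (intro exI[of _ N] allI impI)
      fix m n assume mn: "m \<ge> N" "n \<ge> N"
      show "dist (l m) (l n) < e"
      proof (cases "m \<le> n")
        case True
        then show ?thesis using b[of m n] N mn by (auto simp: dist_real_def)
      next
        case False
        then have "\<bar>l n - l m\<bar> \<le> \<theta> ^ n * D" using b[of n m] by simp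
        then show ?thesis using N mn by (auto simp: dist_real_def abs_minus_commute)
      qed
    qed
  qed
  then show ?thesis by (simp add: Cauchy_convergent_iff)
qed


context setting
begin

lemma it_SP: "x0 \<in> SP \<Longrightarrow> (G ^^ k) x0 \<in> SP"
  by (induction k) (auto intro!: G_SP dest: set_mp[OF SP_B])

lemma it_step: assumes "x0 \<in> SP"
  shows "mu_gamma \<gamma> ((G ^^ Suc k) x0) ((G ^^ k) x0) \<le> \<theta> ^ k * mu_gamma \<gamma> (G x0) x0"
proof (induction k)
  case 0
  then show ?case by simp
next
  case (Suc k)
  have B1: "(G ^^ Suc k) x0 \<in> B" "(G ^^ k) x0 \<in> B" using it_SP[OF assms] SP_B by blast+
  have "mu_gamma \<gamma> ((G ^^ Suc (Suc k)) x0) ((G ^^ Suc k) x0) = mu_gamma \<gamma> (G ((G ^^ Suc k) x0)) (G ((G ^^ k) x0))"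
    by simp
  also have "\<dots> \<le> \<theta> * mu_gamma \<gamma> ((G ^^ Suc k) x0) ((G ^^ k) x0)" by (rule contract[OF B1])
  also have "\<dots> \<le> \<theta> * (\<theta> ^ k * mu_gamma \<gamma> (G x0) x0)" using Suc th0 by (rule mult_left_mono)
  finally show ?case by simp
qed

lemma mu1_nonneg: "mu_gamma \<gamma> x y \<ge> 0" using mu_nonneg[OF gamma_pos] .

lemma it_far: assumes "x0 \<in> SP"
  shows "mu_gamma \<gamma> ((G ^^ k) x0) ((G ^^ (k + n)) x0) \<le> \<theta> ^ k * (mu_gamma \<gamma> (G x0) x0 / (1 - \<theta>))"
proof -
  let ?m = "mu_gamma \<gamma> (G x0) x0"
  have "mu_gamma \<gamma> ((G ^^ k) x0) ((G ^^ (k + n)) x0) \<le> (\<Sum>t<n. \<theta> ^ (k + t) * ?m)"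
  proof (induction n)
    case 0
    have "mu_gamma \<gamma> ((G ^^ k) x0) ((G ^^ k) x0) \<le> 0"
      unfolding mu_gamma_eq Mw_def Mu_def by simp
    then show ?case by simp
  next
    case (Suc n)
    have "mu_gamma \<gamma> ((G ^^ k) x0) ((G ^^ (k + Suc n)) x0)
        \<le> mu_gamma \<gamma> ((G ^^ k) x0) ((G ^^ (k + n)) x0) + mu_gamma \<gamma> ((G ^^ (k + n)) x0) ((G ^^ (k + Suc n)) x0)"
      by (rule mu_tri[OF gamma_pos])
    also have "mu_gamma \<gamma> ((G ^^ (k + n)) x0) ((G ^^ (k + Suc n)) x0) \<le> \<theta> ^ (k + n) * ?m"
      using it_step[OF assms, of "k + n"] by (simp add: mu_sym[of \<gamma> "(G ^^ (k + n)) x0"])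
    finally show ?case using Suc by simp
  qed
  also have "\<dots> = \<theta> ^ k * ?m * (\<Sum>t<n. \<theta> ^ t)"
    by (simp add: power_add sum_distrib_left sum_distrib_right mult_ac)
  also have "\<dots> \<le> \<theta> ^ k * ?m * (1 / (1 - \<theta>))"
  proof (rule mult_left_mono)
    have "(\<Sum>t<n. \<theta> ^ t) = (1 - \<theta> ^ n) / (1 - \<theta>)" using th1 by (simp add: sum_gp_strict)
    also have "\<dots> \<le> 1 / (1 - \<theta>)" using th0 th1 by (intro divide_right_mono) auto
    finally show "(\<Sum>t<n. \<theta> ^ t) \<le> 1 / (1 - \<theta>)" .
    show "0 \<le> \<theta> ^ k * ?m" using th0 mu1_nonneg[of "G x0" x0] by simp
  qed
  finally show ?thesis by simp
qed

lemma it_far2: assumes "x0 \<in> SP" "k \<le> m"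
  shows "mu_gamma \<gamma> ((G ^^ k) x0) ((G ^^ m) x0) \<le> \<theta> ^ k * (mu_gamma \<gamma> (G x0) x0 / (1 - \<theta>))"
  using it_far[OF assms(1), of k "m - k"] assms(2) by simp

lemma it_ln_w: assumes "x0 \<in> SP" "k \<le> m"
  shows "\<bar>ln (fst ((G ^^ k) x0) $ i $ j) - ln (fst ((G ^^ m) x0) $ i $ j)\<bar>
     \<le> \<theta> ^ k * (mu_gamma \<gamma> (G x0) x0 / (1 - \<theta>) / \<gamma>$(Some i))"
proof -
  have g: "\<gamma>$(Some i) > 0" using gamma_pos by blast
  have "\<bar>ln (fst ((G ^^ k) x0) $ i $ j) - ln (fst ((G ^^ m) x0) $ i $ j)\<bar> \<le> Mw ((G ^^ k) x0) ((G ^^ m) x0) i"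
    by (rule Mw_ge)
  also have "\<dots> \<le> mu_gamma \<gamma> ((G ^^ k) x0) ((G ^^ m) x0) / \<gamma>$(Some i)"
    using Mw_le_mu[OF gamma_pos, of i "(G ^^ k) x0" "(G ^^ m) x0"] g by (simp add: le_divide_eq mult.commute)
  also have "\<dots> \<le> \<theta> ^ k * (mu_gamma \<gamma> (G x0) x0 / (1 - \<theta>)) / \<gamma>$(Some i)"
    by (rule divide_right_mono[OF it_far2[OF assms]]) (use g in simp)
  finally show ?thesis by simp
qed

lemma it_ln_u: assumes "x0 \<in> SP" "k \<le> m"
  shows "\<bar>ln (snd ((G ^^ k) x0) $ a $ b) - ln (snd ((G ^^ m) x0) $ a $ b)\<bar>
     \<le> \<theta> ^ k * (mu_gamma \<gamma> (G x0) x0 / (1 - \<theta>) / \<gamma>$None)"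
proof -
  have g: "\<gamma>$None > 0" using gamma_pos by blast
  have "\<bar>ln (snd ((G ^^ k) x0) $ a $ b) - ln (snd ((G ^^ m) x0) $ a $ b)\<bar> \<le> Mu ((G ^^ k) x0) ((G ^^ m) x0)"
    by (rule Mu_ge)
  also have "\<dots> \<le> mu_gamma \<gamma> ((G ^^ k) x0) ((G ^^ m) x0) / \<gamma>$None"
    using Mu_le_mu[OF gamma_pos, of "(G ^^ k) x0" "(G ^^ m) x0"] g by (simp add: le_divide_eq mult.commute)
  also have "\<dots> \<le> \<theta> ^ k * (mu_gamma \<gamma> (G x0) x0 / (1 - \<theta>)) / \<gamma>$None"
    by (rule divide_right_mono[OF it_far2[OF assms]]) (use g in simp)
  finally show ?thesis by simp
qed

definition xlim :: "(real^'n^'k) \<times> (real^'d^'n) \<Rightarrow> (real^'n^'k) \<times> (real^'d^'n)" where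
  "xlim x0 = ((\<chi> i j. exp (lim (\<lambda>k. ln (fst ((G ^^ k) x0) $ i $ j)))),
              (\<chi> a b. exp (lim (\<lambda>k. ln (snd ((G ^^ k) x0) $ a $ b)))))"

lemma it_conv: assumes "x0 \<in> SP" shows "(\<lambda>k. (G ^^ k) x0) \<longlonglongrightarrow> xlim x0"
proof -
  have pos: "fst ((G ^^ k) x0) $ i $ j > 0" "snd ((G ^^ k) x0) $ a $ b > 0" for k i j a b
    using it_SP[OF assms, of k] by (auto simp: Spp_def Vpp_def)
  have cw: "(\<lambda>k. fst ((G ^^ k) x0) $ i $ j) \<longlonglongrightarrow> fst (xlim x0) $ i $ j" for i j
  proof -
    have "convergent (\<lambda>k. ln (fst ((G ^^ k) x0) $ i $ j))"
      by (rule cauchy_from_bound[OF it_ln_w[OF assms] th0 th1])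
    then have "(\<lambda>k. ln (fst ((G ^^ k) x0) $ i $ j)) \<longlonglongrightarrow> lim (\<lambda>k. ln (fst ((G ^^ k) x0) $ i $ j))"
      by (simp add: convergent_LIMSEQ_iff)
    then have "(\<lambda>k. exp (ln (fst ((G ^^ k) x0) $ i $ j))) \<longlonglongrightarrow> exp (lim (\<lambda>k. ln (fst ((G ^^ k) x0) $ i $ j)))"
      by (rule tendsto_exp)
    then show ?thesis using pos by (simp add: xlim_def)
  qed
  have cu: "(\<lambda>k. snd ((G ^^ k) x0) $ a $ b) \<longlonglongrightarrow> snd (xlim x0) $ a $ b" for a b
  proof -
    have "convergent (\<lambda>k. ln (snd ((G ^^ k) x0) $ a $ b))"
      by (rule cauchy_from_bound[OF it_ln_u[OF assms] th0 th1])
    then have "(\<lambda>k. ln (snd ((G ^^ k) x0) $ a $ b)) \<longlonglongrightarrow> lim (\<lambda>k. ln (snd ((G ^^ k) x0) $ a $ b))"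
      by (simp add: convergent_LIMSEQ_iff)
    then have "(\<lambda>k. exp (ln (snd ((G ^^ k) x0) $ a $ b))) \<longlonglongrightarrow> exp (lim (\<lambda>k. ln (snd ((G ^^ k) x0) $ a $ b)))"
      by (rule tendsto_exp)
    then show ?thesis using pos by (simp add: xlim_def)
  qed
  have "(\<lambda>k. fst ((G ^^ k) x0)) \<longlonglongrightarrow> fst (xlim x0)"
    by (intro vec_tendstoI) (use cw in auto)
  moreover have "(\<lambda>k. snd ((G ^^ k) x0)) \<longlonglongrightarrow> snd (xlim x0)"
    by (intro vec_tendstoI) (use cu in auto)
  ultimately have "(\<lambda>k. (fst ((G ^^ k) x0), snd ((G ^^ k) x0))) \<longlonglongrightarrow> (fst (xlim x0), snd (xlim x0))"
    by (rule tendsto_Pair)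
  then show ?thesis by simp
qed

end


lemma entry_le_supnorm:
  fixes z :: "(real^'n::finite^'k::finite) \<times> (real^'d::finite^'n)"
  shows "\<bar>fst z $ i $ j\<bar> \<le> supnorm z" "\<bar>snd z $ a $ b\<bar> \<le> supnorm z"
proof -
  have "\<bar>fst z $ i $ j\<bar> \<le> Max {\<bar>fst z $ i $ j\<bar> | i j. True}" by (rule Max2_ge)
  then show "\<bar>fst z $ i $ j\<bar> \<le> supnorm z" unfolding supnorm_def by simp
  have "\<bar>snd z $ a $ b\<bar> \<le> Max {\<bar>snd z $ a $ b\<bar> | a b. True}" by (rule Max2_ge)
  then show "\<bar>snd z $ a $ b\<bar> \<le> supnorm z" unfolding supnorm_def by simp
qed

lemma supnorm_le:
  fixes z :: "(real^'n::finite^'k::finite) \<times> (real^'d::finite^'n)"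
  assumes "\<forall>i j. \<bar>fst z $ i $ j\<bar> \<le> M" "\<forall>a b. \<bar>snd z $ a $ b\<bar> \<le> M"
  shows "supnorm z \<le> M"
  unfolding supnorm_def by (rule max.boundedI; rule Max2_le) (use assms in auto)

context setting
begin

definition cc :: real where "cc = min (\<gamma>$None / ru) (Min {\<gamma>$(Some t) / rw | t. True})"

lemma cc_props: "cc > 0" "cc \<le> \<gamma>$None / ru" "\<forall>t. cc \<le> \<gamma>$(Some t) / rw"
proof -
  have e: "{\<gamma>$(Some t) / rw | t. True} = range (\<lambda>t. \<gamma>$(Some t) / rw)" by auto
  have "Min {\<gamma>$(Some t) / rw | t. True} > 0"
    unfolding e using gamma_pos rw by (subst Min_gr_iff) auto
  then show "cc > 0" unfolding cc_def using gamma_pos ru by simp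
  show "cc \<le> \<gamma>$None / ru" unfolding cc_def by simp
  show "\<forall>t. cc \<le> \<gamma>$(Some t) / rw" unfolding cc_def e by (auto intro!: min.coboundedI2 Min_le)
qed

lemma it_comp: assumes "x0 \<in> SP"
  shows "(\<lambda>k. fst ((G ^^ k) x0) $ i $ j) \<longlonglongrightarrow> fst (xlim x0) $ i $ j"
        "(\<lambda>k. snd ((G ^^ k) x0) $ a $ b) \<longlonglongrightarrow> snd (xlim x0) $ a $ b"
  using it_conv[OF assms] by (auto intro!: tendsto_intros)

lemma xlim_pos: "\<forall>i j. fst (xlim x0) $ i $ j > 0" "\<forall>a b. snd (xlim x0) $ a $ b > 0"
  unfolding xlim_def by auto

lemma xlim_SP: assumes "x0 \<in> SP" shows "xlim x0 \<in> SP"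
proof -
  have xS: "\<forall>k. (G ^^ k) x0 \<in> SP" using it_SP[OF assms] by blast
  have nw: "vnorm pw (fst (xlim x0) $ i) = rw" for i
  proof -
    have pos: "(\<Sum>j\<in>UNIV. \<bar>fst (xlim x0) $ i $ j\<bar> powr pw) > 0"
      using xlim_pos by (intro sum_pos) (auto simp: order_less_imp_not_eq2)
    have "(\<lambda>k. (\<Sum>j\<in>UNIV. \<bar>fst ((G ^^ k) x0) $ i $ j\<bar> powr pw) powr (1/pw))
         \<longlonglongrightarrow> (\<Sum>j\<in>UNIV. \<bar>fst (xlim x0) $ i $ j\<bar> powr pw) powr (1/pw)"
      using pos xlim_pos
      by (intro tendsto_powr tendsto_sum tendsto_rabs it_comp[OF assms] tendsto_const)
         (auto simp: order_less_imp_not_eq2)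
    moreover have "(\<lambda>k. (\<Sum>j\<in>UNIV. \<bar>fst ((G ^^ k) x0) $ i $ j\<bar> powr pw) powr (1/pw)) = (\<lambda>k. rw)"
    proof -
      have "\<forall>k. vnorm pw (fst ((G ^^ k) x0) $ i) = rw" using xS by (auto simp: Spp_def Splus_def case_prod_beta)
      then show ?thesis unfolding vnorm_def by auto
    qed
    ultimately show ?thesis unfolding vnorm_def using LIMSEQ_unique tendsto_const by metis
  qed
  have nu: "mnorm pu (snd (xlim x0)) = ru"
  proof -
    have pos: "(\<Sum>a\<in>UNIV. \<Sum>b\<in>UNIV. \<bar>snd (xlim x0) $ a $ b\<bar> powr pu) > 0"
      using xlim_pos by (intro sum_pos) (auto simp: order_less_imp_not_eq2)
    have "(\<lambda>k. (\<Sum>a\<in>UNIV. \<Sum>b\<in>UNIV. \<bar>snd ((G ^^ k) x0) $ a $ b\<bar> powr pu) powr (1/pu))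
         \<longlonglongrightarrow> (\<Sum>a\<in>UNIV. \<Sum>b\<in>UNIV. \<bar>snd (xlim x0) $ a $ b\<bar> powr pu) powr (1/pu)"
      using pos xlim_pos
      by (intro tendsto_powr tendsto_sum tendsto_rabs it_comp[OF assms] tendsto_const)
         (auto simp: order_less_imp_not_eq2)
    moreover have "(\<lambda>k. (\<Sum>a\<in>UNIV. \<Sum>b\<in>UNIV. \<bar>snd ((G ^^ k) x0) $ a $ b\<bar> powr pu) powr (1/pu)) = (\<lambda>k. ru)"
    proof -
      have "\<forall>k. mnorm pu (snd ((G ^^ k) x0)) = ru" using xS by (auto simp: Spp_def Splus_def case_prod_beta)
      then show ?thesis unfolding mnorm_def by auto
    qed
    ultimately show ?thesis unfolding mnorm_def using LIMSEQ_unique tendsto_const by metis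
  qed
  have p1: "\<forall>i j. fst (xlim x0)$i$j > 0" "\<forall>a b. snd (xlim x0)$a$b > 0" using xlim_pos[of x0] by auto
  show ?thesis using nw nu p1 unfolding Spp_def Splus_def Vpp_def
    by (cases "xlim x0") (auto intro: less_imp_le)
qed

lemma xlim_fix: assumes "x0 \<in> SP" shows "G (xlim x0) = xlim x0"
proof -
  have xB: "xlim x0 \<in> B" using xlim_SP[OF assms] SP_B by blast
  have w: "fst (G (xlim x0)) $ i $ j = fst (xlim x0) $ i $ j" for i j
  proof -
    have "isCont (\<lambda>y. fst (G y) $ i $ j) (xlim x0)"
      using differentiable_imp_continuous_within[OF G_fst_diff[OF xB]] by (simp add: continuous_at)
    then have "(\<lambda>k. fst (G ((G ^^ k) x0)) $ i $ j) \<longlonglongrightarrow> fst (G (xlim x0)) $ i $ j"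
      using isCont_tendsto_compose[OF _ it_conv[OF assms]] by blast
    moreover have "(\<lambda>k. fst (G ((G ^^ k) x0)) $ i $ j) \<longlonglongrightarrow> fst (xlim x0) $ i $ j"
      using LIMSEQ_Suc[OF it_comp(1)[OF assms, of i j]] by simp
    ultimately show ?thesis using LIMSEQ_unique by blast
  qed
  have u: "snd (G (xlim x0)) $ a $ b = snd (xlim x0) $ a $ b" for a b
  proof -
    have "isCont (\<lambda>y. snd (G y) $ a $ b) (xlim x0)"
      using differentiable_imp_continuous_within[OF G_snd_diff[OF xB]] by (simp add: continuous_at)
    then have "(\<lambda>k. snd (G ((G ^^ k) x0)) $ a $ b) \<longlonglongrightarrow> snd (G (xlim x0)) $ a $ b"
      using isCont_tendsto_compose[OF _ it_conv[OF assms]] by blast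
    moreover have "(\<lambda>k. snd (G ((G ^^ k) x0)) $ a $ b) \<longlonglongrightarrow> snd (xlim x0) $ a $ b"
      using LIMSEQ_Suc[OF it_comp(2)[OF assms, of a b]] by simp
    ultimately show ?thesis using LIMSEQ_unique by blast
  qed
  show ?thesis using w u by (simp add: prod_eq_iff vec_eq_iff)
qed

lemma fix_unique: assumes "x \<in> SP" "y \<in> SP" "G x = x" "G y = y" shows "x = y"
proof -
  have "mu_gamma \<gamma> x y = mu_gamma \<gamma> (G x) (G y)" using assms by simp
  also have "\<dots> \<le> \<theta> * mu_gamma \<gamma> x y" using assms SP_B by (intro contract) auto
  finally have "(1 - \<theta>) * mu_gamma \<gamma> x y \<le> 0" by (simp add: algebra_simps)
  then have "mu_gamma \<gamma> x y \<le> 0" using th1 by (simp add: mult_le_0_iff)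
  moreover have "x \<in> Vpp" "y \<in> Vpp" using assms by (auto simp: Spp_def)
  ultimately show ?thesis using mu_zero[OF gamma_pos, of x y] by blast
qed

lemma err_bound: assumes "x0 \<in> SP"
  shows "supnorm ((G ^^ k) x0 - xlim x0) \<le> \<theta> ^ k * (mu_gamma \<gamma> (G x0) x0 / (1 - \<theta>)) / cc"
proof -
  let ?D = "\<theta> ^ k * (mu_gamma \<gamma> (G x0) x0 / (1 - \<theta>)) / cc"
  have far: "supnorm ((G ^^ k) x0 - (G ^^ m) x0) \<le> ?D" if "k \<le> m" for m
  proof -
    have "supnorm ((G ^^ k) x0 - (G ^^ m) x0) \<le> mu_gamma \<gamma> ((G ^^ k) x0) ((G ^^ m) x0) / cc"
      using pw pu rw ru cc_props it_SP[OF assms]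
      by (intro supnorm_bound[OF gamma_pos, where pw=pw and pu=pu and rw=rw and ru=ru]) auto
    also have "\<dots> \<le> ?D"
      by (rule divide_right_mono[OF it_far2[OF assms that]]) (use cc_props in simp)
    finally show ?thesis .
  qed
  have "\<bar>fst ((G ^^ k) x0 - xlim x0) $ i $ j\<bar> \<le> ?D" for i j
  proof -
    have "(\<lambda>m. \<bar>fst ((G ^^ k) x0) $ i $ j - fst ((G ^^ m) x0) $ i $ j\<bar>) \<longlonglongrightarrow> \<bar>fst ((G ^^ k) x0) $ i $ j - fst (xlim x0) $ i $ j\<bar>"
      by (intro tendsto_rabs tendsto_diff tendsto_const it_comp[OF assms])
    moreover have "\<forall>m\<ge>k. \<bar>fst ((G ^^ k) x0) $ i $ j - fst ((G ^^ m) x0) $ i $ j\<bar> \<le> ?D"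
    proof (intro allI impI)
      fix m assume "k \<le> m"
      have "\<bar>fst ((G ^^ k) x0 - (G ^^ m) x0) $ i $ j\<bar> \<le> supnorm ((G ^^ k) x0 - (G ^^ m) x0)"
        by (rule entry_le_supnorm)
      then show "\<bar>fst ((G ^^ k) x0) $ i $ j - fst ((G ^^ m) x0) $ i $ j\<bar> \<le> ?D" using far[OF \<open>k \<le> m\<close>] by simp
    qed
    ultimately have "\<bar>fst ((G ^^ k) x0) $ i $ j - fst (xlim x0) $ i $ j\<bar> \<le> ?D"
      by (intro LIMSEQ_le_const2) auto
    then show ?thesis by simp
  qed
  moreover have "\<bar>snd ((G ^^ k) x0 - xlim x0) $ a $ b\<bar> \<le> ?D" for a b
  proof -
    have "(\<lambda>m. \<bar>snd ((G ^^ k) x0) $ a $ b - snd ((G ^^ m) x0) $ a $ b\<bar>) \<longlonglongrightarrow> \<bar>snd ((G ^^ k) x0) $ a $ b - snd (xlim x0) $ a $ b\<bar>"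
      by (intro tendsto_rabs tendsto_diff tendsto_const it_comp[OF assms])
    moreover have "\<forall>m\<ge>k. \<bar>snd ((G ^^ k) x0) $ a $ b - snd ((G ^^ m) x0) $ a $ b\<bar> \<le> ?D"
    proof (intro allI impI)
      fix m assume "k \<le> m"
      have "\<bar>snd ((G ^^ k) x0 - (G ^^ m) x0) $ a $ b\<bar> \<le> supnorm ((G ^^ k) x0 - (G ^^ m) x0)"
        by (rule entry_le_supnorm)
      then show "\<bar>snd ((G ^^ k) x0) $ a $ b - snd ((G ^^ m) x0) $ a $ b\<bar> \<le> ?D" using far[OF \<open>k \<le> m\<close>] by simp
    qed
    ultimately have "\<bar>snd ((G ^^ k) x0) $ a $ b - snd (xlim x0) $ a $ b\<bar> \<le> ?D"
      by (intro LIMSEQ_le_const2) auto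
    then show ?thesis by simp
  qed
  ultimately show ?thesis by (intro supnorm_le) auto
qed

end


lemma abspow_deriv_all:
  fixes p s :: real
  assumes p: "p > 1"
  shows "((\<lambda>s. \<bar>s\<bar> powr p) has_real_derivative p * psi p s) (at s)"
proof -
  consider "s > 0" | "s < 0" | "s = 0" by linarith
  then show ?thesis
  proof cases
    case 1
    then show ?thesis using abspow_has_deriv[OF 1, of p] by (simp add: psi_def)
  next
    case 2
    have d: "((\<lambda>z. (- z) powr p) has_real_derivative p * (- s) powr (p - 1) * (- 1)) (at s)"
      using 2 by (auto intro!: derivative_eq_intros)
    show ?thesis
    proof (rule has_field_derivative_transform_within_open[OF _ _ _, where S="{..<0}"])
      show "((\<lambda>z. (- z) powr p) has_real_derivative p * psi p s) (at s)"
        using d 2 by (simp add: psi_def)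
    qed (use 2 in auto)
  next
    case 3
    have "((\<lambda>y. (\<bar>y\<bar> powr p - \<bar>0\<bar> powr p) / (y - 0)) \<longlongrightarrow> 0) (at 0)"
    proof (rule Lim_null_comparison)
      show "\<forall>\<^sub>F y in at 0. norm ((\<bar>y\<bar> powr p - \<bar>0\<bar> powr p) / (y - 0)) \<le> \<bar>y\<bar> powr (p - 1)"
      proof (rule always_eventually, rule allI)
        fix y :: real
        show "norm ((\<bar>y\<bar> powr p - \<bar>0\<bar> powr p) / (y - 0)) \<le> \<bar>y\<bar> powr (p - 1)"
        proof (cases "y = 0")
          case True then show ?thesis by simp
        next
          case False
          have "\<bar>y\<bar> powr p = \<bar>y\<bar> powr ((p - 1) + 1)" by simp
          also have "\<dots> = \<bar>y\<bar> powr (p - 1) * \<bar>y\<bar> powr 1" by (rule powr_add)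
          also have "\<dots> = \<bar>y\<bar> powr (p - 1) * \<bar>y\<bar>" using False by simp
          finally have "\<bar>y\<bar> powr p = \<bar>y\<bar> powr (p - 1) * \<bar>y\<bar>" .
          then show ?thesis using False p by (simp add: abs_divide)
        qed
      qed
      show "((\<lambda>y. \<bar>y\<bar> powr (p - 1)) \<longlongrightarrow> 0) (at 0)"
      proof -
        have "((\<lambda>y. \<bar>y\<bar> powr (p - 1)) \<longlongrightarrow> \<bar>0\<bar> powr (p - 1)) (at (0::real))"
          using p by (intro tendsto_powr' tendsto_rabs tendsto_ident_at tendsto_const) auto
        then show ?thesis by simp
      qed
    qed
    then have "((\<lambda>s. \<bar>s\<bar> powr p) has_real_derivative 0) (at 0)"
      by (simp add: has_field_derivative_iff)
    then show ?thesis using 3 by (simp add: psi_def)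
  qed
qed


lemma gnorm_scale:
  fixes a :: "'j \<Rightarrow> real"
  assumes "c \<ge> 0" "p > 0"
  shows "(\<Sum>l\<in>S. \<bar>c * a l\<bar> powr p) powr (1/p) = c * (\<Sum>l\<in>S. \<bar>a l\<bar> powr p) powr (1/p)"
proof -
  have "(\<Sum>l\<in>S. \<bar>c * a l\<bar> powr p) = c powr p * (\<Sum>l\<in>S. \<bar>a l\<bar> powr p)"
    using assms by (simp add: abs_mult powr_mult sum_distrib_left)
  then show ?thesis using assms by (simp add: powr_mult powr_powr sum_nonneg)
qed

lemma block_step:
  fixes \<Phi> :: "'x::real_normed_vector \<Rightarrow> real" and E :: "'j \<Rightarrow> 'x" and v h g :: "'j \<Rightarrow> real"
  assumes S: "finite S" and p: "p > 1" and \<rho>: "\<rho> > 0"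
    and vn: "(\<Sum>l\<in>S. \<bar>v l\<bar> powr p) powr (1/p) = \<rho>"
    and D: "(\<Phi> has_derivative D) (at y)"
    and gE: "\<forall>l\<in>S. D (E l) = g l"
    and mem: "\<forall>c. (\<forall>l\<in>S. c l \<ge> 0) \<and> (\<Sum>l\<in>S. \<bar>c l\<bar> powr p) powr (1/p) = \<rho> \<longrightarrow>
                  \<Phi> (y + (\<Sum>l\<in>S. (c l - v l) *\<^sub>R E l)) \<le> \<Phi> y"
    and orth: "(\<Sum>l\<in>S. psi p (v l) * h l) = 0"
    and \<delta>: "\<delta> > 0"
    and adm: "\<forall>t. 0 < t \<and> t < \<delta> \<longrightarrow> (\<forall>l\<in>S. v l + t * h l \<ge> 0) \<and> (\<exists>l\<in>S. v l + t * h l > 0)"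
  shows "(\<Sum>l\<in>S. g l * h l) \<le> 0"
proof (rule ccontr)
  assume neg: "\<not> (\<Sum>l\<in>S. g l * h l) \<le> 0"
  define Sm where "Sm t = (\<Sum>l\<in>S. \<bar>v l + t * h l\<bar> powr p)" for t
  define N where "N t = Sm t powr (1/p)" for t
  define \<beta> where "\<beta> l t = \<rho> / N t * (v l + t * h l)" for l t
  define \<phi> where "\<phi> t = \<Phi> (y + (\<Sum>l\<in>S. (\<beta> l t - v l) *\<^sub>R E l))" for t
  have N0: "N 0 = \<rho>" unfolding N_def Sm_def using vn by simp
  have Sm0: "Sm 0 > 0"
  proof -
    have "Sm 0 \<ge> 0" unfolding Sm_def by (auto intro: sum_nonneg)
    moreover have "Sm 0 \<noteq> 0" using N0 \<rho> unfolding N_def by auto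
    ultimately show ?thesis by simp
  qed
  have dSm: "DERIV Sm 0 :> (\<Sum>l\<in>S. p * psi p (v l) * h l)"
    unfolding Sm_def
  proof (rule DERIV_sum)
    fix l assume "l \<in> S"
    have i: "((\<lambda>t. v l + t * h l) has_real_derivative h l) (at 0)"
      by (auto intro!: derivative_eq_intros)
    show "((\<lambda>t. \<bar>v l + t * h l\<bar> powr p) has_real_derivative p * psi p (v l) * h l) (at 0)"
      using DERIV_chain'[OF i, of "\<lambda>s. \<bar>s\<bar> powr p"] abspow_deriv_all[OF p, of "v l"] by simp
  qed
  have "(\<Sum>l\<in>S. p * psi p (v l) * h l) = p * (\<Sum>l\<in>S. psi p (v l) * h l)"
    by (simp add: sum_distrib_left mult.assoc)
  then have dSm0: "DERIV Sm 0 :> 0" using dSm orth by simp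
  have dN: "DERIV N 0 :> 0"
    unfolding N_def using DERIV_chain'[OF dSm0 has_real_derivative_powr[OF Sm0, of "1/p"]] by simp
  have Npos0: "N 0 \<noteq> 0" using N0 \<rho> by simp
  have d\<beta>: "DERIV (\<beta> l) 0 :> h l" for l
  proof -
    have a: "DERIV (\<lambda>t. \<rho> / N t) 0 :> (0 * N 0 - \<rho> * 0) / (N 0 * N 0)"
      by (rule DERIV_divide[OF DERIV_const dN Npos0])
    have b: "DERIV (\<lambda>t. v l + t * h l) 0 :> h l" by (auto intro!: derivative_eq_intros)
    have "DERIV (\<lambda>t. \<rho> / N t * (v l + t * h l)) 0 :>
        (0 * N 0 - \<rho> * 0) / (N 0 * N 0) * (v l + 0 * h l) + h l * (\<rho> / N 0)"
      by (rule DERIV_mult[OF a b])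
    then show ?thesis unfolding \<beta>_def using N0 \<rho> by simp
  qed
  have \<beta>0: "\<beta> l 0 = v l" for l unfolding \<beta>_def using N0 \<rho> by simp
  have dc: "((\<lambda>t. y + (\<Sum>l\<in>S. (\<beta> l t - v l) *\<^sub>R E l)) has_derivative (\<lambda>s. \<Sum>l\<in>S. (s * h l) *\<^sub>R E l)) (at 0)"
  proof -
    have "((\<lambda>t. (\<beta> l t - v l) *\<^sub>R E l) has_derivative (\<lambda>s. (s * h l) *\<^sub>R E l)) (at 0)" for l
    proof -
      have "((\<lambda>t. \<beta> l t - v l) has_derivative (*) (h l)) (at 0)"
        using d\<beta>[of l] unfolding has_field_derivative_def by (auto intro!: derivative_eq_intros)
      moreover have "(*) (h l) = (\<lambda>s. s * h l)" by (rule ext) (simp only: mult.commute)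
      ultimately have "((\<lambda>t. \<beta> l t - v l) has_derivative (\<lambda>s. s * h l)) (at 0)"
        by simp
      then show ?thesis by (rule has_derivative_scaleR_left)
    qed
    then have "((\<lambda>t. \<Sum>l\<in>S. (\<beta> l t - v l) *\<^sub>R E l) has_derivative (\<lambda>s. \<Sum>l\<in>S. (s * h l) *\<^sub>R E l)) (at 0)"
      by (intro has_derivative_sum) auto
    from has_derivative_add[OF has_derivative_const[of y] this]
    show ?thesis by simp
  qed
  have c0: "y + (\<Sum>l\<in>S. (\<beta> l 0 - v l) *\<^sub>R E l) = y" using \<beta>0 by simp
  have d\<phi>: "DERIV \<phi> 0 :> (\<Sum>l\<in>S. g l * h l)"
  proof -
    have "(\<phi> has_derivative (\<lambda>s. D (\<Sum>l\<in>S. (s * h l) *\<^sub>R E l))) (at 0)"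
      unfolding \<phi>_def using has_derivative_compose[OF dc] D c0 by simp
    moreover have "(\<lambda>s. D (\<Sum>l\<in>S. (s * h l) *\<^sub>R E l)) = (*) (\<Sum>l\<in>S. g l * h l)"
    proof
      fix s
      have lin: "linear D" using has_derivative_linear[OF D] .
      have "D (\<Sum>l\<in>S. (s * h l) *\<^sub>R E l) = (\<Sum>l\<in>S. (s * h l) * D (E l))"
        using lin by (simp add: linear_sum linear_scale)
      also have "\<dots> = (\<Sum>l\<in>S. s * (g l * h l))"
        using gE by (intro sum.cong) (auto simp: mult_ac)
      also have "\<dots> = s * (\<Sum>l\<in>S. g l * h l)" by (rule sum_distrib_left[symmetric])
      also have "\<dots> = (\<Sum>l\<in>S. g l * h l) * s" by (rule mult.commute)
      finally show "D (\<Sum>l\<in>S. (s * h l) *\<^sub>R E l) = (\<Sum>l\<in>S. g l * h l) * s" .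
    qed
    ultimately show ?thesis unfolding has_field_derivative_def by simp
  qed
  have pos: "0 < (\<Sum>l\<in>S. g l * h l)" using neg by simp
  obtain d where d: "d > 0" "\<forall>\<tau>>0. \<tau> < d \<longrightarrow> \<phi> 0 < \<phi> (0 + \<tau>)"
    using DERIV_pos_inc_right[OF d\<phi> pos] by blast
  define \<tau> where "\<tau> = min d \<delta> / 2"
  have \<tau>: "\<tau> > 0" "\<tau> < d" "\<tau> < \<delta>" unfolding \<tau>_def using d \<delta> by auto
  have "\<phi> 0 < \<phi> (0 + \<tau>)" using d(2) \<tau>(1,2) by blast
  then have lt: "\<phi> 0 < \<phi> \<tau>" by simp
  have "(\<forall>l\<in>S. v l + \<tau> * h l \<ge> 0) \<and> (\<exists>l\<in>S. v l + \<tau> * h l > 0)" using adm \<tau>(1,3) by blast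
  then have nn: "\<forall>l\<in>S. v l + \<tau> * h l \<ge> 0" and ex: "\<exists>l\<in>S. v l + \<tau> * h l > 0" by auto
  have Smt: "Sm \<tau> > 0"
  proof -
    obtain l0 where l0: "l0 \<in> S" "v l0 + \<tau> * h l0 > 0" using ex by blast
    have "\<bar>v l0 + \<tau> * h l0\<bar> powr p \<le> Sm \<tau>" unfolding Sm_def
      using S l0 by (intro member_le_sum) auto
    moreover have "\<bar>v l0 + \<tau> * h l0\<bar> powr p > 0" using l0 by simp
    ultimately show ?thesis by linarith
  qed
  have Nt: "N \<tau> > 0" unfolding N_def using Smt by simp
  have cnn: "\<forall>l\<in>S. \<beta> l \<tau> \<ge> 0" unfolding \<beta>_def using nn Nt \<rho> by (auto intro: mult_nonneg_nonneg)
  have cn: "(\<Sum>l\<in>S. \<bar>\<beta> l \<tau>\<bar> powr p) powr (1/p) = \<rho>"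
  proof -
    have "(\<Sum>l\<in>S. \<bar>\<beta> l \<tau>\<bar> powr p) powr (1/p) = \<rho> / N \<tau> * (\<Sum>l\<in>S. \<bar>v l + \<tau> * h l\<bar> powr p) powr (1/p)"
      unfolding \<beta>_def using Nt \<rho> p by (intro gnorm_scale) auto
    also have "\<dots> = \<rho>" using Nt unfolding N_def Sm_def by simp
    finally show ?thesis .
  qed
  have "\<phi> \<tau> \<le> \<Phi> y" unfolding \<phi>_def using mem[rule_format, of "\<lambda>l. \<beta> l \<tau>"] cnn cn by blast
  moreover have "\<phi> 0 = \<Phi> y" unfolding \<phi>_def using c0 by simp
  ultimately show False using lt by simp
qed


lemma sum_if_delta: assumes "finite S" "a \<in> S"
  shows "(\<Sum>l\<in>S. f l * (if l = a then c else 0)) = f a * (c::real)"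
proof -
  have "(\<Sum>l\<in>S. f l * (if l = a then c else 0)) = (\<Sum>l\<in>S. if l = a then f l * c else 0)"
    by (rule sum.cong) auto
  also have "\<dots> = f a * c" using assms by simp
  finally show ?thesis .
qed

lemma block_crit:
  fixes \<Phi> :: "'x::real_normed_vector \<Rightarrow> real" and E :: "'j \<Rightarrow> 'x" and v g :: "'j \<Rightarrow> real"
  assumes S: "finite S" "S \<noteq> {}" and p: "p > 1" and \<rho>: "\<rho> > 0"
    and vnn: "\<forall>l\<in>S. v l \<ge> 0"
    and vn: "(\<Sum>l\<in>S. \<bar>v l\<bar> powr p) powr (1/p) = \<rho>"
    and D: "(\<Phi> has_derivative D) (at y)"
    and gE: "\<forall>l\<in>S. D (E l) = g l"
    and gpos: "\<forall>l\<in>S. g l > 0"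
    and mem: "\<forall>c. (\<forall>l\<in>S. c l \<ge> 0) \<and> (\<Sum>l\<in>S. \<bar>c l\<bar> powr p) powr (1/p) = \<rho> \<longrightarrow>
                  \<Phi> (y + (\<Sum>l\<in>S. (c l - v l) *\<^sub>R E l)) \<le> \<Phi> y"
  shows "(\<forall>l\<in>S. v l > 0) \<and> (\<exists>lam. \<forall>l\<in>S. g l = lam * psi p (v l))"
proof -
  note step = block_step[OF S(1) p \<rho> vn D gE mem]
  have vpos: "\<forall>l\<in>S. v l > 0"
  proof (rule ballI, rule ccontr)
    fix b assume b: "b \<in> S" "\<not> v b > 0"
    then have vb: "v b = 0" using vnn by force
    let ?h = "\<lambda>l. if l = b then 1 else (0::real)"
    have orth: "(\<Sum>l\<in>S. psi p (v l) * ?h l) = 0"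
      using sum_if_delta[OF S(1) b(1), of "\<lambda>l. psi p (v l)" 1] vb by (simp add: psi_def)
    have adm: "\<forall>t. 0 < t \<and> t < 1 \<longrightarrow> (\<forall>l\<in>S. v l + t * ?h l \<ge> 0) \<and> (\<exists>l\<in>S. v l + t * ?h l > 0)"
      using vnn b(1) vb by auto
    have "(\<Sum>l\<in>S. g l * ?h l) \<le> 0" by (rule step[OF orth _ adm]) simp
    then have "g b \<le> 0" using sum_if_delta[OF S(1) b(1), of g 1] by simp
    then show False using gpos b(1) by auto
  qed
  let ?\<psi> = "\<lambda>l. psi p (v l)"
  have \<psi>pos: "\<forall>l\<in>S. ?\<psi> l > 0" using vpos psi_pos_gt0 by blast
  have half: "g a * ?\<psi> b - g b * ?\<psi> a \<le> 0" if ab: "a \<in> S" "b \<in> S" "a \<noteq> b" for a b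
  proof -
    let ?h = "\<lambda>l. (if l = a then ?\<psi> b else 0) - (if l = b then ?\<psi> a else 0)"
    have sh: "(\<Sum>l\<in>S. f l * ?h l) = f a * ?\<psi> b - f b * ?\<psi> a" for f
    proof -
      have "(\<Sum>l\<in>S. f l * ?h l) = (\<Sum>l\<in>S. f l * (if l = a then ?\<psi> b else 0)) - (\<Sum>l\<in>S. f l * (if l = b then ?\<psi> a else 0))"
        by (simp add: right_diff_distrib sum_subtractf)
      also have "\<dots> = f a * ?\<psi> b - f b * ?\<psi> a"
        using sum_if_delta[OF S(1) ab(1)] sum_if_delta[OF S(1) ab(2)] by simp
      finally show ?thesis .
    qed
    have orth: "(\<Sum>l\<in>S. ?\<psi> l * ?h l) = 0" using sh[of ?\<psi>] by simp
    define \<delta> where "\<delta> = v b / ?\<psi> a"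
    have \<delta>: "\<delta> > 0" unfolding \<delta>_def using vpos \<psi>pos ab by auto
    have adm: "\<forall>t. 0 < t \<and> t < \<delta> \<longrightarrow> (\<forall>l\<in>S. v l + t * ?h l \<ge> 0) \<and> (\<exists>l\<in>S. v l + t * ?h l > 0)"
    proof (intro allI impI conjI ballI)
      fix t assume t: "0 < t \<and> t < \<delta>"
      have tb: "t * ?\<psi> a < v b" using t \<psi>pos ab unfolding \<delta>_def by (simp add: less_divide_eq)
      fix l assume l: "l \<in> S"
      show "v l + t * ?h l \<ge> 0"
      proof (cases "l = a")
        case True
        then have "v l + t * ?h l = v a + t * ?\<psi> b" using ab by simp
        then show ?thesis using vpos \<psi>pos ab t by (simp add: add_nonneg_nonneg less_imp_le)
      next
        case False
        show ?thesis
        proof (cases "l = b")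
          case True
          then have "v l + t * ?h l = v b - t * ?\<psi> a" using ab False by simp
          then show ?thesis using tb by simp
        next
          case False2: False
          then show ?thesis using False vpos l by (simp add: less_imp_le)
        qed
      qed
    next
      fix t assume t: "0 < t \<and> t < \<delta>"
      have "v a + t * ?h a > 0" using ab vpos \<psi>pos t by (simp add: add_pos_pos)
      then show "\<exists>l\<in>S. v l + t * ?h l > 0" using ab(1) by blast
    qed
    have "(\<Sum>l\<in>S. g l * ?h l) \<le> 0" by (rule step[OF orth \<delta> adm])
    then show ?thesis using sh[of g] by simp
  qed
  have eq: "g a * ?\<psi> b = g b * ?\<psi> a" if "a \<in> S" "b \<in> S" for a b
  proof (cases "a = b")
    case True then show ?thesis by simp
  next
    case False
    have "g a * ?\<psi> b - g b * ?\<psi> a \<le> 0" using half that False by blast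
    moreover have "g b * ?\<psi> a - g a * ?\<psi> b \<le> 0" using half that False by blast
    ultimately show ?thesis by linarith
  qed
  obtain l0 where l0: "l0 \<in> S" using S(2) by blast
  have "\<forall>l\<in>S. g l = (g l0 / ?\<psi> l0) * ?\<psi> l"
  proof
    fix l assume "l \<in> S"
    have "g l * ?\<psi> l0 = g l0 * ?\<psi> l" using eq[OF \<open>l \<in> S\<close> l0] .
    moreover have "?\<psi> l0 > 0" using \<psi>pos l0 by blast
    ultimately show "g l = (g l0 / ?\<psi> l0) * ?\<psi> l" by (simp add: field_simps)
  qed
  then show ?thesis using vpos by blast
qed


lemma vnorm_cont: assumes "p > 0"
  shows "continuous_on UNIV (\<lambda>x::(real^'n::finite^'k::finite) \<times> (real^'d::finite^'n). vnorm p (fst x $ i))"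
  unfolding vnorm_def using assms
  by (intro continuous_on_powr' continuous_intros) (auto intro: sum_nonneg)

lemma mnorm_cont: assumes "p > 0"
  shows "continuous_on UNIV (\<lambda>x::(real^'n::finite^'k::finite) \<times> (real^'d::finite^'n). mnorm p (snd x))"
  unfolding mnorm_def using assms
  by (intro continuous_on_powr' continuous_intros) (auto intro!: sum_nonneg)

lemma Splus_closed: assumes "pw > 0" "pu > 0"
  shows "closed (Splus pw pu rw ru :: ((real^'n::finite^'k::finite) \<times> (real^'d::finite^'n)) set)"
proof -
  have e: "Splus pw pu rw ru = {x::(real^'n^'k) \<times> (real^'d^'n). (\<forall>i j. 0 \<le> fst x $ i $ j) \<and> (\<forall>a b. 0 \<le> snd x $ a $ b) \<and>
      mnorm pu (snd x) = ru \<and> (\<forall>i. vnorm pw (fst x $ i) = rw)}"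
    unfolding Splus_def by auto
  show ?thesis unfolding e
    by (intro closed_Collect_conj closed_Collect_all closed_Collect_le closed_Collect_eq
        continuous_intros vnorm_cont mnorm_cont assms)
qed

lemma vec_norm_bound: fixes w :: "real^'n::finite^'k::finite"
  assumes "\<forall>i j. \<bar>w $ i $ j\<bar> \<le> r"
  shows "norm w \<le> real CARD('k) * (real CARD('n) * r)"
proof -
  have "norm w \<le> (\<Sum>i\<in>UNIV. norm (w $ i))" unfolding norm_vec_def by (rule L2_set_le_sum) simp
  also have "\<dots> \<le> (\<Sum>i\<in>UNIV. (\<Sum>j\<in>UNIV. \<bar>w $ i $ j\<bar>))" by (intro sum_mono norm_le_l1_cart)
  also have "\<dots> \<le> (\<Sum>i\<in>(UNIV::'k set). (\<Sum>j\<in>(UNIV::'n set). r))" using assms by (intro sum_mono) auto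
  finally show ?thesis by simp
qed

lemma Splus_bounded: assumes "pw > 0" "pu > 0"
  shows "bounded (Splus pw pu rw ru :: ((real^'n::finite^'k::finite) \<times> (real^'d::finite^'n)) set)"
proof -
  let ?A = "{w::real^'n^'k. \<forall>i j. \<bar>w $ i $ j\<bar> \<le> rw}" and ?B = "{u::real^'d^'n. \<forall>a b. \<bar>u $ a $ b\<bar> \<le> ru}"
  have sub: "Splus pw pu rw ru \<subseteq> ?A \<times> ?B"
  proof
    fix x :: "(real^'n^'k) \<times> (real^'d^'n)" assume x: "x \<in> Splus pw pu rw ru"
    obtain w u where xw: "x = (w, u)" by (cases x)
    have "\<bar>w $ i $ j\<bar> \<le> rw" for i j
      using x vnorm_ge_entry[of "w $ i" j pw] assms by (auto simp: Splus_def xw)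
    moreover have "\<bar>u $ a $ b\<bar> \<le> ru" for a b
      using x mnorm_ge_entry[of u a b pu] assms by (auto simp: Splus_def xw)
    ultimately show "x \<in> ?A \<times> ?B" by (simp add: xw)
  qed
  have bA: "bounded ?A"
    unfolding bounded_iff by (rule exI[of _ "real CARD('k) * (real CARD('n) * rw)"]) (auto intro: vec_norm_bound)
  have bB: "bounded ?B"
    unfolding bounded_iff by (rule exI[of _ "real CARD('n) * (real CARD('d) * ru)"]) (auto intro: vec_norm_bound)
  show ?thesis by (rule bounded_subset[OF bounded_Times[OF bA bB] sub])
qed

lemma Spp_nonempty: assumes "pw > 0" "pu > 0" "rw > 0" "ru > 0"
  shows "(Spp pw pu rw ru :: ((real^'n::finite^'k::finite) \<times> (real^'d::finite^'n)) set) \<noteq> {}"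
proof -
  define cw where "cw = rw / real CARD('n) powr (1/pw)"
  define cu where "cu = ru / real (CARD('n) * CARD('d)) powr (1/pu)"
  have cw: "cw > 0" unfolding cw_def using assms by simp
  have cu: "cu > 0" unfolding cu_def using assms by simp
  let ?e = "((\<chi> i j. cw), (\<chi> a b. cu)) :: (real^'n^'k) \<times> (real^'d^'n)"
  have nw: "vnorm pw (fst ?e $ i) = rw" for i
  proof -
    have "vnorm pw (fst ?e $ i) = (real CARD('n) * cw powr pw) powr (1/pw)"
      unfolding vnorm_def using cw by simp
    also have "\<dots> = real CARD('n) powr (1/pw) * cw"
      using cw assms by (simp add: powr_mult powr_powr)
    also have "\<dots> = rw" unfolding cw_def by simp
    finally show ?thesis .
  qed
  have nu: "mnorm pu (snd ?e) = ru"
  proof -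
    have "mnorm pu (snd ?e) = (real (CARD('n) * CARD('d)) * cu powr pu) powr (1/pu)"
      unfolding mnorm_def using cu by (simp add: mult.assoc)
    also have "\<dots> = real (CARD('n) * CARD('d)) powr (1/pu) * cu"
      using cu assms by (simp add: powr_mult powr_powr del: of_nat_mult)
    also have "\<dots> = ru" unfolding cu_def by simp
    finally show ?thesis .
  qed
  have "?e \<in> Spp pw pu rw ru"
    using nw nu cw cu unfolding Spp_def Splus_def Vpp_def by auto
  then show ?thesis by blast
qed


lemma row_upd:
  fixes y :: "(real^'n::finite^'k::finite) \<times> (real^'d::finite^'n)" and c :: "'n \<Rightarrow> real"
  shows "y + (\<Sum>l\<in>UNIV. (c l - fst y $ i $ l) *\<^sub>R ew i l) = ((\<chi> k. if k = i then (\<chi> l. c l) else fst y $ k), snd y)"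
proof -
  have f: "(fst y + (\<Sum>l\<in>UNIV. (c l - fst y $ i $ l) *\<^sub>R (axis i (axis l 1) :: real^'n^'k))) $ k $ j
        = (if k = i then c j else fst y $ k $ j)" for k j
  proof -
    have "(fst y + (\<Sum>l\<in>UNIV. (c l - fst y $ i $ l) *\<^sub>R (axis i (axis l 1) :: real^'n^'k))) $ k $ j
        = fst y $ k $ j + (\<Sum>l\<in>UNIV. (c l - fst y $ i $ l) * (if i = k then if l = j then 1 else 0 else 0))"
      by (simp add: sum_component axis2)
    also have "\<dots> = (if k = i then c j else fst y $ k $ j)"
    proof (cases "k = i")
      case True
      have "(\<Sum>l\<in>UNIV. (c l - fst y $ i $ l) * (if i = k then if l = j then 1 else 0 else 0))
          = (\<Sum>l\<in>UNIV. (c l - fst y $ i $ l) * (if l = j then 1 else 0))" using True by simp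
      also have "\<dots> = c j - fst y $ i $ j" by (simp add: sum_if_delta)
      finally show ?thesis using True by simp
    next
      case False
      then show ?thesis by simp
    qed
    finally show ?thesis .
  qed
  show ?thesis
    by (simp add: prod_eq_iff fst_sum snd_sum ew_def vec_eq_iff f del: vector_add_component)
qed

lemma mat_upd:
  fixes y :: "(real^'n::finite^'k::finite) \<times> (real^'d::finite^'n)" and c :: "'n \<times> 'd \<Rightarrow> real"
  shows "y + (\<Sum>z\<in>UNIV. (c z - snd y $ fst z $ snd z) *\<^sub>R eu (fst z) (snd z)) = (fst y, (\<chi> a b. c (a, b)))"
proof -
  have f: "(snd y + (\<Sum>z\<in>UNIV. (c z - snd y $ fst z $ snd z) *\<^sub>R (axis (fst z) (axis (snd z) 1) :: real^'d^'n))) $ a $ b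
        = c (a, b)" for a b
  proof -
    have "(snd y + (\<Sum>z\<in>UNIV. (c z - snd y $ fst z $ snd z) *\<^sub>R (axis (fst z) (axis (snd z) 1) :: real^'d^'n))) $ a $ b
        = snd y $ a $ b + (\<Sum>z\<in>UNIV. (c z - snd y $ fst z $ snd z) * (if fst z = a then if snd z = b then 1 else 0 else 0))"
      by (simp add: sum_component axis2)
    also have "(\<Sum>z\<in>UNIV. (c z - snd y $ fst z $ snd z) * (if fst z = a then if snd z = b then 1 else 0 else 0))
        = (\<Sum>z\<in>UNIV. (c z - snd y $ fst z $ snd z) * (if z = (a, b) then 1 else 0))"
      by (rule sum.cong) (auto simp: prod_eq_iff)
    also have "(\<Sum>z\<in>UNIV. (c z - snd y $ fst z $ snd z) * (if z = (a, b) then 1 else 0)) = c (a,b) - snd y $ a $ b"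
      using sum_if_delta[of UNIV "(a,b)" "\<lambda>z. c z - snd y $ fst z $ snd z" 1] by simp
    finally show ?thesis by simp
  qed
  show ?thesis
    by (simp add: prod_eq_iff fst_sum snd_sum eu_def vec_eq_iff f del: vector_add_component)
qed


lemma sum_pairs: fixes f :: "'a::finite \<Rightarrow> 'b::finite \<Rightarrow> real"
  shows "(\<Sum>z\<in>UNIV. f (fst z) (snd z)) = (\<Sum>a\<in>UNIV. \<Sum>b\<in>UNIV. f a b)"
  by (simp add: sum.cartesian_product case_prod_beta)

context setting
begin

lemma max_crit:
  assumes yS: "y \<in> Splus pw pu rw ru" and ymax: "\<forall>z\<in>Splus pw pu rw ru. \<Phi> z \<le> \<Phi> y"
  shows "y \<in> SP \<and> is_crit pw pu \<Phi> y"
proof -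
  obtain g0 where g0: "\<forall>x. (\<Phi> has_derivative blinfun_apply (g0 x)) (at x)" using C1g by blast
  have D: "(\<Phi> has_derivative blinfun_apply (g0 y)) (at y)" using g0 by blast
  have gp: "\<forall>i j. dw \<Phi> y i j > 0" "\<forall>a b. du \<Phi> y a b > 0" using grad_pos yS by auto
  have yp: "\<forall>i j. fst y $ i $ j \<ge> 0" "\<forall>a b. snd y $ a $ b \<ge> 0" "mnorm pu (snd y) = ru" "\<forall>i. vnorm pw (fst y $ i) = rw"
    using yS by (auto simp: Splus_def case_prod_beta)
  have wblk: "(\<forall>l. fst y $ i $ l > 0) \<and> (\<exists>lam. \<forall>l. dw \<Phi> y i l = lam * psi pw (fst y $ i $ l))" for i
  proof -
    have "(\<forall>l\<in>UNIV. fst y $ i $ l > 0) \<and> (\<exists>lam. \<forall>l\<in>UNIV. dw \<Phi> y i l = lam * psi pw (fst y $ i $ l))"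
    proof (rule block_crit[where \<Phi>=\<Phi> and E="ew i" and D="blinfun_apply (g0 y)" and y=y and \<rho>=rw])
      show "(\<Sum>l\<in>UNIV. \<bar>fst y $ i $ l\<bar> powr pw) powr (1/pw) = rw" using yp(4) by (simp add: vnorm_def)
      show "\<forall>l\<in>UNIV. blinfun_apply (g0 y) (ew i l) = dw \<Phi> y i l" using dw_eq[OF D] by simp
      show "\<forall>c. (\<forall>l\<in>UNIV. c l \<ge> 0) \<and> (\<Sum>l\<in>UNIV. \<bar>c l\<bar> powr pw) powr (1/pw) = rw \<longrightarrow>
                  \<Phi> (y + (\<Sum>l\<in>UNIV. (c l - fst y $ i $ l) *\<^sub>R ew i l)) \<le> \<Phi> y"
      proof (intro allI impI)
        fix c :: "'n \<Rightarrow> real" assume c: "(\<forall>l\<in>UNIV. c l \<ge> 0) \<and> (\<Sum>l\<in>UNIV. \<bar>c l\<bar> powr pw) powr (1/pw) = rw"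
        have "((\<chi> k. if k = i then (\<chi> l. c l) else fst y $ k), snd y) \<in> Splus pw pu rw ru"
        proof -
          let ?w = "(\<chi> k. if k = i then (\<chi> l. c l) else fst y $ k) :: real^'n^'k"
          have n1: "vnorm pw (\<chi> l. c l) = rw" using c[THEN conjunct2] unfolding vnorm_def by simp
          have "\<forall>k. vnorm pw (?w $ k) = rw" using n1 yp(4) by simp
          moreover have "\<forall>k j. 0 \<le> ?w $ k $ j" using c yp(1) by simp
          ultimately show ?thesis using yp(2,3) unfolding Splus_def by simp
        qed
        then show "\<Phi> (y + (\<Sum>l\<in>UNIV. (c l - fst y $ i $ l) *\<^sub>R ew i l)) \<le> \<Phi> y"
          using ymax by (simp add: row_upd)
      qed
    qed (use pw rw yp gp D in auto)
    then show ?thesis by simp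
  qed
  have ublk: "(\<forall>z\<in>UNIV. snd y $ fst z $ snd z > 0) \<and> (\<exists>lam. \<forall>z\<in>UNIV. du \<Phi> y (fst z) (snd z) = lam * psi pu (snd y $ fst z $ snd z))"
  proof (rule block_crit[where \<Phi>=\<Phi> and E="\<lambda>z. eu (fst z) (snd z)" and D="blinfun_apply (g0 y)" and y=y and \<rho>=ru])
    show "(\<Sum>z\<in>UNIV. \<bar>snd y $ fst z $ snd z\<bar> powr pu) powr (1/pu) = ru"
      using yp(3) unfolding mnorm_def sum_pairs[of "\<lambda>a b. \<bar>snd y $ a $ b\<bar> powr pu"] .
    show "\<forall>z\<in>UNIV. blinfun_apply (g0 y) (eu (fst z) (snd z)) = du \<Phi> y (fst z) (snd z)" using du_eq[OF D] by simp
    show "\<forall>c. (\<forall>l\<in>UNIV. c l \<ge> 0) \<and> (\<Sum>l\<in>UNIV. \<bar>c l\<bar> powr pu) powr (1/pu) = ru \<longrightarrow>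
                \<Phi> (y + (\<Sum>z\<in>UNIV. (c z - snd y $ fst z $ snd z) *\<^sub>R eu (fst z) (snd z))) \<le> \<Phi> y"
    proof (intro allI impI)
      fix c :: "'n \<times> 'd \<Rightarrow> real" assume c: "(\<forall>l\<in>UNIV. c l \<ge> 0) \<and> (\<Sum>l\<in>UNIV. \<bar>c l\<bar> powr pu) powr (1/pu) = ru"
      have "(\<Sum>l\<in>UNIV. \<bar>c l\<bar> powr pu) = (\<Sum>a\<in>UNIV. \<Sum>b\<in>UNIV. \<bar>c (a, b)\<bar> powr pu)"
        using sum_pairs[of "\<lambda>a b. \<bar>c (a, b)\<bar> powr pu"] by simp
      then have m1: "mnorm pu (\<chi> a b. c (a, b)) = ru"
        using c[THEN conjunct2] unfolding mnorm_def by simp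
      have "\<forall>a b. 0 \<le> (\<chi> a b. c (a, b)) $ a $ b" using c by simp
      then have "(fst y, (\<chi> a b. c (a, b))) \<in> Splus pw pu rw ru"
        using m1 yp(1,4) unfolding Splus_def by simp
      then show "\<Phi> (y + (\<Sum>z\<in>UNIV. (c z - snd y $ fst z $ snd z) *\<^sub>R eu (fst z) (snd z))) \<le> \<Phi> y"
        using ymax by (simp add: mat_upd)
    qed
  qed (use pu ru yp gp D in auto)
  have wpos: "\<forall>i j. fst y $ i $ j > 0" using wblk by blast
  have upos: "\<forall>a b. snd y $ a $ b > 0"
  proof (intro allI)
    fix a b show "snd y $ a $ b > 0" using ublk[THEN conjunct1, rule_format, of "(a,b)"] by simp
  qed
  have "\<forall>i. \<exists>lam. \<forall>l. dw \<Phi> y i l = lam * psi pw (fst y $ i $ l)" using wblk by blast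
  from choice[OF this] obtain lam where lam: "\<forall>i l. dw \<Phi> y i l = lam i * psi pw (fst y $ i $ l)"
    by blast
  obtain lamu where lamu0: "\<forall>z\<in>UNIV. du \<Phi> y (fst z) (snd z) = lamu * psi pu (snd y $ fst z $ snd z)"
    using ublk by blast
  have lamu: "\<forall>a b. du \<Phi> y a b = lamu * psi pu (snd y $ a $ b)"
  proof (intro allI)
    fix a b show "du \<Phi> y a b = lamu * psi pu (snd y $ a $ b)" using lamu0[rule_format, of "(a,b)"] by simp
  qed
  have "y \<in> Vpp" using wpos upos by (cases y) (auto simp: Vpp_def)
  then have "y \<in> SP" using yS by (simp add: Spp_def)
  moreover have "is_crit pw pu \<Phi> y" unfolding is_crit_def using lam lamu by blast
  ultimately show ?thesis by blast
qed

end


context setting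
begin

lemma main_loc:
  "\<exists>xs. xs \<in> SP \<and> is_crit pw pu \<Phi> xs
     \<and> (\<forall>y\<in>SP. is_crit pw pu \<Phi> y \<longrightarrow> y = xs)
     \<and> (\<forall>y\<in>Splus pw pu rw ru. \<Phi> y \<le> \<Phi> xs)
     \<and> (\<forall>x0\<in>SP. (\<lambda>k. (G ^^ k) x0) \<longlonglongrightarrow> xs
          \<and> (\<forall>k::nat. supnorm ((G ^^ k) x0 - xs) \<le> \<theta> ^ k * (mu_gamma \<gamma> (G x0) x0 / (1 - \<theta>)) / cc))"
proof -
  obtain e0 :: "(real^'n^'k) \<times> (real^'d^'n)" where e0: "e0 \<in> SP" using Spp_nonempty[of pw pu rw ru] pw pu rw ru by auto
  define xs where "xs = xlim e0"
  have xsS: "xs \<in> SP" unfolding xs_def by (rule xlim_SP[OF e0])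
  have xsF: "G xs = xs" unfolding xs_def by (rule xlim_fix[OF e0])
  have gpS: "z \<in> SP \<Longrightarrow> (\<forall>i j. dw \<Phi> z i j > 0) \<and> (\<forall>a b. du \<Phi> z a b > 0)" for z
    using gpB SP_B by blast
  have xsC: "is_crit pw pu \<Phi> xs"
    using fixed_imp_crit[OF pw pu rw ru _ _ xsF] gpS[OF xsS] by blast
  have uniq: "\<forall>y\<in>SP. is_crit pw pu \<Phi> y \<longrightarrow> y = xs"
  proof (intro ballI impI)
    fix y assume y: "y \<in> SP" "is_crit pw pu \<Phi> y"
    have "G y = y" using crit_imp_fixed[OF pw pu rw ru _ _ y(1) y(2)] gpS[OF y(1)] by blast
    then show "y = xs" using fix_unique[OF y(1) xsS _ xsF] by blast
  qed
  have lim_eq: "xlim x0 = xs" if "x0 \<in> SP" for x0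
    using fix_unique[OF xlim_SP[OF that] xsS xlim_fix[OF that] xsF] .
  have conv: "\<forall>x0\<in>SP. (\<lambda>k. (G ^^ k) x0) \<longlonglongrightarrow> xs
          \<and> (\<forall>k::nat. supnorm ((G ^^ k) x0 - xs) \<le> \<theta> ^ k * (mu_gamma \<gamma> (G x0) x0 / (1 - \<theta>)) / cc)"
    using it_conv err_bound lim_eq by auto
  have maxi: "\<forall>y\<in>Splus pw pu rw ru. \<Phi> y \<le> \<Phi> xs"
  proof -
    have comp: "compact (Splus pw pu rw ru :: ((real^'n^'k) \<times> (real^'d^'n)) set)"
      using Splus_closed[of pw pu rw ru] Splus_bounded[of pw pu rw ru] pw pu
      by (simp add: compact_eq_bounded_closed)
    have ne: "(Splus pw pu rw ru :: ((real^'n^'k) \<times> (real^'d^'n)) set) \<noteq> {}" using e0 by (auto simp: Spp_def)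
    obtain g0 where g0: "\<forall>x. (\<Phi> has_derivative blinfun_apply (g0 x)) (at x)" using C1g by blast
    have "continuous_on (Splus pw pu rw ru) \<Phi>"
    proof (rule differentiable_imp_continuous_on)
      show "\<Phi> differentiable_on Splus pw pu rw ru"
        unfolding differentiable_on_def
      proof
        fix x
        have "\<Phi> differentiable (at x)" using g0 unfolding differentiable_def by blast
        then show "\<Phi> differentiable (at x within Splus pw pu rw ru)" by (rule differentiable_at_withinI)
      qed
    qed
    then obtain ym where ym: "ym \<in> Splus pw pu rw ru" "\<forall>z\<in>Splus pw pu rw ru. \<Phi> z \<le> \<Phi> ym"
      using continuous_attains_sup[OF comp ne] by blast
    have "ym \<in> SP \<and> is_crit pw pu \<Phi> ym" by (rule max_crit[OF ym])
    then have "ym = xs" using uniq by blast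
    then show ?thesis using ym by simp
  qed
  show ?thesis using xsS xsC uniq maxi conv by blast
qed

end


theorem mainTheorem7:
  fixes \<Phi> :: "(real^'n::finite^'k::finite) \<times> (real^'d::finite^'n) \<Rightarrow> real"
    and pw pu rw ru :: real
    and A :: "real^('k option)^('k option)"
    and \<gamma> :: "real^('k option)"
  assumes pw: "pw > 1" and pu: "pu > 1" and rw: "rw > 0" and ru: "ru > 0"
    and C1: "C1_on UNIV \<Phi>"
    and C2: "\<exists>U. open U \<and> Bpp pw pu rw ru \<subseteq> U \<and> C2_on U \<Phi>"
    and grad_pos: "\<forall>x \<in> Splus pw pu rw ru \<union> Bpp pw pu rw ru.
                     (\<forall>i j. dw \<Phi> x i j > 0) \<and> (\<forall>a b. du \<Phi> x a b > 0)"
    and A_nonneg: "\<forall>r s. A$r$s \<ge> 0"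
    and H1: "\<forall>x\<in>Bpp pw pu rw ru. \<forall>i k j.
        (\<Sum>l\<in>UNIV. \<bar>dw (\<lambda>y. fst (GPhi pw pu rw ru \<Phi> y) $ i $ j) x k l\<bar> * fst x $ k $ l)
          \<le> A$(Some i)$(Some k) * fst (GPhi pw pu rw ru \<Phi> x) $ i $ j"
    and H2: "\<forall>x\<in>Bpp pw pu rw ru. \<forall>i j.
        (\<Sum>a\<in>UNIV. \<Sum>b\<in>UNIV. \<bar>du (\<lambda>y. fst (GPhi pw pu rw ru \<Phi> y) $ i $ j) x a b\<bar> * snd x $ a $ b)
          \<le> A$(Some i)$None * fst (GPhi pw pu rw ru \<Phi> x) $ i $ j"
    and H3: "\<forall>x\<in>Bpp pw pu rw ru. \<forall>k a b.
        (\<Sum>l\<in>UNIV. \<bar>dw (\<lambda>y. snd (GPhi pw pu rw ru \<Phi> y) $ a $ b) x k l\<bar> * fst x $ k $ l)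
          \<le> A$None$(Some k) * snd (GPhi pw pu rw ru \<Phi> x) $ a $ b"
    and H4: "\<forall>x\<in>Bpp pw pu rw ru. \<forall>a b.
        (\<Sum>a'\<in>UNIV. \<Sum>b'\<in>UNIV. \<bar>du (\<lambda>y. snd (GPhi pw pu rw ru \<Phi> y) $ a $ b) x a' b'\<bar> * snd x $ a' $ b')
          \<le> A$None$None * snd (GPhi pw pu rw ru \<Phi> x) $ a $ b"
    and gamma_pos: "\<forall>r. \<gamma>$r > 0"
    and gamma_eig: "\<exists>\<theta>::real. \<forall>s. (\<Sum>r\<in>UNIV. A$r$s * \<gamma>$r) = \<theta> * \<gamma>$s"
    and rho_lt1: "spec_rad A < 1"
  shows "\<exists>xs. xs \<in> Spp pw pu rw ru \<and> is_crit pw pu \<Phi> xs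
           \<and> (\<forall>y\<in>Spp pw pu rw ru. is_crit pw pu \<Phi> y \<longrightarrow> y = xs)
           \<and> (\<forall>y\<in>Splus pw pu rw ru. \<Phi> y \<le> \<Phi> xs)
           \<and> (\<forall>x0\<in>Spp pw pu rw ru.
                 (\<lambda>k. (GPhi pw pu rw ru \<Phi> ^^ k) x0) \<longlonglongrightarrow> xs
               \<and> (\<forall>k::nat. supnorm ((GPhi pw pu rw ru \<Phi> ^^ k) x0 - xs)
                   \<le> spec_rad A ^ k * mu_gamma \<gamma> (GPhi pw pu rw ru \<Phi> x0) x0
                     / ((1 - spec_rad A) * min (\<gamma>$None / ru) (Min {\<gamma>$(Some t) / rw | t. True}))))"
proof -
  obtain U where U: "open U" "Bpp pw pu rw ru \<subseteq> U" "C2_on U \<Phi>" using C2 by blast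
  obtain f' where f': "\<forall>x\<in>U. (\<Phi> has_derivative blinfun_apply (f' x)) (at x)" "C1_on U f'"
    using U(3) unfolding C2_on_def by blast
  obtain f'' where f'': "\<forall>x\<in>U. (f' has_derivative blinfun_apply (f'' x)) (at x)"
    using f'(2) unfolding C1_on_def by blast
  have C1g: "\<exists>g. \<forall>x. (\<Phi> has_derivative blinfun_apply (g x)) (at x)"
    using C1 unfolding C1_on_def by blast
  obtain \<theta> where th: "\<forall>s. (\<Sum>r\<in>UNIV. A$r$s * \<gamma>$r) = \<theta> * \<gamma>$s" using gamma_eig by blast
  have th0: "0 \<le> \<theta>"
  proof -
    have "0 \<le> (\<Sum>r\<in>UNIV. A$r$None * \<gamma>$r)"
      using A_nonneg gamma_pos by (intro sum_nonneg mult_nonneg_nonneg) (auto intro: less_imp_le)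
    then have "0 \<le> \<theta> * \<gamma>$None" using th by simp
    moreover have "\<gamma>$None > 0" using gamma_pos by blast
    ultimately show ?thesis by (simp add: zero_le_mult_iff)
  qed
  have gne: "\<gamma> \<noteq> 0"
  proof
    assume "\<gamma> = 0" then have "\<gamma>$None = 0" by simp
    then show False using gamma_pos by (metis less_irrefl)
  qed
  have thr: "\<theta> \<le> spec_rad A" using theta_le_specrad[OF gne th] th0 by simp
  have th1: "\<theta> < 1" using thr rho_lt1 by linarith
  interpret S: setting \<Phi> pw pu rw ru A \<gamma> \<theta> U f' f''
    by (unfold_locales) (use pw pu rw ru C1g U f' f'' grad_pos H1 H2 H3 H4 gamma_pos th th0 th1 in auto)
  obtain xs where xs: "xs \<in> Spp pw pu rw ru" "is_crit pw pu \<Phi> xs"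
     "\<forall>y\<in>Spp pw pu rw ru. is_crit pw pu \<Phi> y \<longrightarrow> y = xs"
     "\<forall>y\<in>Splus pw pu rw ru. \<Phi> y \<le> \<Phi> xs"
     "\<forall>x0\<in>Spp pw pu rw ru. (\<lambda>k. (GPhi pw pu rw ru \<Phi> ^^ k) x0) \<longlonglongrightarrow> xs
          \<and> (\<forall>k::nat. supnorm ((GPhi pw pu rw ru \<Phi> ^^ k) x0 - xs)
               \<le> \<theta> ^ k * (mu_gamma \<gamma> (GPhi pw pu rw ru \<Phi> x0) x0 / (1 - \<theta>)) / S.cc)"
    using S.main_loc by blast
  have cc: "S.cc = min (\<gamma>$None / ru) (Min {\<gamma>$(Some t) / rw | t. True})" by (rule S.cc_def)
  have ccpos: "S.cc > 0" using S.cc_props by blast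
  have fin: "\<theta> ^ k * (M / (1 - \<theta>)) / S.cc \<le> spec_rad A ^ k * M / ((1 - spec_rad A) * S.cc)"
    if M: "M \<ge> 0" for M and k :: nat
  proof -
    have a: "\<theta> ^ k \<le> spec_rad A ^ k" by (rule power_mono[OF thr th0])
    have b: "1 / (1 - \<theta>) \<le> 1 / (1 - spec_rad A)" using thr rho_lt1 by (intro divide_left_mono) auto
    have "\<theta> ^ k * (M / (1 - \<theta>)) = (\<theta> ^ k * M) * (1 / (1 - \<theta>))" by simp
    also have "\<dots> \<le> (spec_rad A ^ k * M) * (1 / (1 - spec_rad A))"
    proof -
      have r0: "0 \<le> spec_rad A" using th0 thr by linarith
      show ?thesis using a b M th0 th1 r0 by (intro mult_mono mult_right_mono) auto
    qed
    finally have "\<theta> ^ k * (M / (1 - \<theta>)) \<le> spec_rad A ^ k * M / (1 - spec_rad A)" by simp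
    then have "\<theta> ^ k * (M / (1 - \<theta>)) / S.cc \<le> spec_rad A ^ k * M / (1 - spec_rad A) / S.cc"
      using ccpos by (intro divide_right_mono) auto
    then show ?thesis by (simp only: divide_divide_eq_left)
  qed
  show ?thesis
  proof (intro exI[of _ xs] conjI)
    show "xs \<in> Spp pw pu rw ru" by (rule xs(1))
    show "is_crit pw pu \<Phi> xs" by (rule xs(2))
    show "\<forall>y\<in>Spp pw pu rw ru. is_crit pw pu \<Phi> y \<longrightarrow> y = xs" by (rule xs(3))
    show "\<forall>y\<in>Splus pw pu rw ru. \<Phi> y \<le> \<Phi> xs" by (rule xs(4))
    show "\<forall>x0\<in>Spp pw pu rw ru.
                 (\<lambda>k. (GPhi pw pu rw ru \<Phi> ^^ k) x0) \<longlonglongrightarrow> xs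
               \<and> (\<forall>k::nat. supnorm ((GPhi pw pu rw ru \<Phi> ^^ k) x0 - xs)
                   \<le> spec_rad A ^ k * mu_gamma \<gamma> (GPhi pw pu rw ru \<Phi> x0) x0
                     / ((1 - spec_rad A) * min (\<gamma>$None / ru) (Min {\<gamma>$(Some t) / rw | t. True})))"
    proof (intro ballI conjI allI)
      fix x0 :: "(real^'n^'k) \<times> (real^'d^'n)" assume x0: "x0 \<in> Spp pw pu rw ru"
      note X = xs(5)[rule_format, OF x0]
      show "(\<lambda>k. (GPhi pw pu rw ru \<Phi> ^^ k) x0) \<longlonglongrightarrow> xs" using X by (rule conjunct1)
      fix k :: nat
      have "supnorm ((GPhi pw pu rw ru \<Phi> ^^ k) x0 - xs)
          \<le> \<theta> ^ k * (mu_gamma \<gamma> (GPhi pw pu rw ru \<Phi> x0) x0 / (1 - \<theta>)) / S.cc" using X[THEN conjunct2] by (rule spec)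
      also have "\<dots> \<le> spec_rad A ^ k * mu_gamma \<gamma> (GPhi pw pu rw ru \<Phi> x0) x0 / ((1 - spec_rad A) * S.cc)"
        by (rule fin[OF mu_nonneg[OF gamma_pos]])
      finally show "supnorm ((GPhi pw pu rw ru \<Phi> ^^ k) x0 - xs)
                   \<le> spec_rad A ^ k * mu_gamma \<gamma> (GPhi pw pu rw ru \<Phi> x0) x0
                     / ((1 - spec_rad A) * min (\<gamma>$None / ru) (Min {\<gamma>$(Some t) / rw | t. True}))"
        unfolding cc .
    qed
  qed
qed


end
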